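(* Let $G_0^*$ be a $(k,r_0)$-regular hypergraph on $n$ vertices and $G_1^*$ a $(k,r_1)$-regular hypergraph on $m$ vertices. List the eigenvalues of $S(G_0^* )$ with multiplicity as $n-1-2r_0(k-1),\mu_2^{(0)},\dots,\mu_n^{(0)}$, where $\mu_2^{(0)},\dots,\mu_n^{(0)}$ are the eigenvalues of $S(G_0^* )$ on the orthogonal complement of the all-ones vector; similarly list the eigenvalues of $S(G_1^* )$ as $m-1-2r_1(k-1),\mu_2^{(1)},\dots,\mu_m^{(1)}$. Let $\mathcal{S}$ be the Seidel corona matrix of $G_0^*$ and $G_1^*$, and $b=\binom{m-1}{k-2}$. Then the spectrum of $\mathcal{S}$ (as a multiset) consists of: the $2(n-1)$ numbers $$\frac{\mu_i^{(0)}-1-2r_1(k-1)\pm\sqrt{\big(\mu_i^{(0)}+1+2r_1(k-1)\big)^2+16mb^2}}{2},\qquad i=2,\dots,n;$$ each $\mu_j^{(1)}$, $j=2,\dots,m$, with multiplicity $n$; and the two roots $\alpha_1,\alpha_2$ of $$\mu^2+\big(2-n(m+1)+2(r_0+r_1)(k-1)\big)\mu+\big(n-1-2r_0(k-1)\big)\big(mn-1-2r_1(k-1)\big)-m(n-2b)^2=0.$$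
   Context: All hypergraphs are finite and simple: a hypergraph $G^*=(V,E)$ consists of a finite vertex set $V$ and a set $E$ of subsets of $V$ (hyperedges), each of size at least $2$. It is $k$-uniform if every hyperedge has exactly $k$ elements, and $(k,r)$-regular if it is $k$-uniform and every vertex lies in exactly $r$ hyperedges. For a hypergraph with vertices $v_1,\dots,v_n$, the adjacency matrix $A(G^* )$ is the $n\times n$ matrix whose $(i,j)$ entry, for $i\ne j$, is the number of hyperedges containing both $v_i$ and $v_j$, and whose diagonal entries are $0$; the Seidel matrix is $S(G^* )=J_n-I_n-2A(G^* )$. $J_n$ (resp. $J_{a,b}$) is the all-ones $n\times n$ (resp. $a\times b$) matrix, $I_n$ the identity, $\otimes$ the Kronecker product. Binomial coefficients $\binom{x}{y}$ with integers $x\ge 0$ and $y$ are $0$ when $y<0$ or $y>x$. Seidel corona matrix: for $k$-uniform hypergraphs $G_0^*$ on $n$ vertices and $G_1^*$ on $m$ vertices, with $b=\binom{m-1}{k-2}$, $$\mathcal{S}=\begin{bmatrix}S(G_0^* ) & J_{1,m}\otimes(J_n-2bI_n)\\ J_{m,1}\otimes(J_n-2bI_n) & J_m\otimes(J_n-I_n)+S(G_1^* )\otimes I_n\end{bmatrix},$$ which equals $J_{n(m+1)}-I_{n(m+1)}-2\mathcal{A}$ for $\mathcal{A}=\begin{bmatrix}A(G_0^* ) & b(J_{1,m}\otimes I_n)\\ b(J_{m,1}\otimes I_n) & A(G_1^* )\otimes I_n\end{bmatrix}$. *)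

theory Defs
  imports "Jordan_Normal_Form.Char_Poly"
begin

definition hypergraph :: "nat \<Rightarrow> nat set set \<Rightarrow> bool" where
  "hypergraph n E \<longleftrightarrow> (\<forall>e\<in>E. e \<subseteq> {0..<n} \<and> 2 \<le> card e)"

definition uniform_hg :: "nat \<Rightarrow> nat \<Rightarrow> nat set set \<Rightarrow> bool" where
  "uniform_hg k n E \<longleftrightarrow> hypergraph n E \<and> (\<forall>e\<in>E. card e = k)"

definition regular_hg :: "nat \<Rightarrow> nat \<Rightarrow> nat \<Rightarrow> nat set set \<Rightarrow> bool" where
  "regular_hg k r n E \<longleftrightarrow> uniform_hg k n E \<and> (\<forall>v<n. card {e\<in>E. v \<in> e} = r)"

definition all_ones :: "nat \<Rightarrow> nat \<Rightarrow> real mat" where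
  "all_ones a b = mat a b (\<lambda>_. 1)"

definition adj_mat :: "nat \<Rightarrow> nat set set \<Rightarrow> real mat" where
  "adj_mat n E = mat n n (\<lambda>(i,j). if i = j then 0 else real (card {e\<in>E. i \<in> e \<and> j \<in> e}))"

definition seidel_mat :: "nat \<Rightarrow> nat set set \<Rightarrow> real mat" where
  "seidel_mat n E = all_ones n n - 1\<^sub>m n - 2 \<cdot>\<^sub>m adj_mat n E"

definition kron :: "real mat \<Rightarrow> real mat \<Rightarrow> real mat" where
  "kron A B = mat (dim_row A * dim_row B) (dim_col A * dim_col B)
     (\<lambda>(i,j). A $$ (i div dim_row B, j div dim_col B) * B $$ (i mod dim_row B, j mod dim_col B))"

text \<open>b = binom(m-1, k-2), with the convention that it is 0 when k-2 < 0.\<close>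
definition corona_b :: "nat \<Rightarrow> nat \<Rightarrow> real" where
  "corona_b k m = (if k < 2 then 0 else real ((m - 1) choose (k - 2)))"

definition seidel_corona :: "nat \<Rightarrow> nat \<Rightarrow> nat \<Rightarrow> nat set set \<Rightarrow> nat set set \<Rightarrow> real mat" where
  "seidel_corona k n m E0 E1 =
     (let b = corona_b k m;
          C = all_ones n n - (2 * b) \<cdot>\<^sub>m 1\<^sub>m n
      in four_block_mat (seidel_mat n E0) (kron (all_ones 1 m) C)
                        (kron (all_ones m 1) C)
                        (kron (all_ones m m) (all_ones n n - 1\<^sub>m n) + kron (seidel_mat m E1) (1\<^sub>m n)))"

text \<open>Spectrum with (algebraic) multiplicities: the multiset of roots of the
  characteristic polynomial, when it splits over the reals (as it does for symmetric matrices).\<close>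
definition spectrum_mset :: "real mat \<Rightarrow> real multiset" where
  "spectrum_mset A = (THE M. char_poly A = (\<Prod>a\<in>#M. [:- a, 1:]))"

end

theory Submission
  imports Defs "Jordan_Normal_Form.Schur_Decomposition"
begin

lemma sum_shift_block: "sum f {k..<k+(b::nat)} = (\<Sum>q<b. f (k+q))"
  by (induction b) (auto simp: add.commute)

lemma sum_mult_idx: "(\<Sum>k<a*(b::nat). f k) = (\<Sum>p<a. \<Sum>q<b. f (p*b+q))"
  using sum.nat_group[of f b a, symmetric] sum_shift_block
  by (simp add: sum_shift_block)

lemma kron_carrier[simp]: "dim_row (kron A B) = dim_row A * dim_row B" "dim_col (kron A B) = dim_col A * dim_col B"
  by (auto simp: kron_def)

lemma kron_index[simp]: "i < dim_row A * dim_row B \<Longrightarrow> j < dim_col A * dim_col B \<Longrightarrow>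
  kron A B $$ (i,j) = A $$ (i div dim_row B, j div dim_col B) * B $$ (i mod dim_row B, j mod dim_col B)"
  by (auto simp: kron_def)

lemma kron_carrier_mat[simp,intro]: "A \<in> carrier_mat a b \<Longrightarrow> B \<in> carrier_mat p q \<Longrightarrow> kron A B \<in> carrier_mat (a*p) (b*q)"
  unfolding carrier_mat_def by simp

lemma div_lt_mult: "(i::nat) < a * p \<Longrightarrow> i div p < a"
  by (simp add: less_mult_imp_div_less)

lemma kron_mult:
  assumes A: "A \<in> carrier_mat a b" and B: "B \<in> carrier_mat p q" and C: "C \<in> carrier_mat b c" and D: "D \<in> carrier_mat q r"
  shows "kron A B * kron C D = kron (A*C) (B*D)"
proof (rule eq_matI)
  fix i j assume i: "i < dim_row (kron (A*C) (B*D))" and j: "j < dim_col (kron (A*C) (B*D))"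
  hence i': "i < a*p" and j': "j < c*r" using A B C D by auto
  have ip: "i div p < a" "i mod p < p" using i' div_lt_mult by (auto, metis mod_less_divisor mult_0_right neq0_conv not_less_zero)
  have jr: "j div r < c" "j mod r < r" using j' div_lt_mult by (auto, metis mod_less_divisor mult_0_right neq0_conv not_less_zero)
  have "(kron A B * kron C D) $$ (i,j) = (\<Sum>k<b*q. kron A B $$ (i,k) * kron C D $$ (k,j))"
    using A B C D i' j' by (simp add: scalar_prod_def sum.reindex lessThan_atLeast0 row_def col_def)
  also have "\<dots> = (\<Sum>u<b. \<Sum>v<q. (A $$ (i div p, u) * C $$ (u, j div r)) * (B $$ (i mod p, v) * D $$ (v, j mod r)))"
    unfolding sum_mult_idx
  proof (intro sum.cong refl)
    fix u v assume u: "u \<in> {..<b}" and v: "v \<in> {..<q}"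
    have uv: "u*q+v < b*q"
    proof -
      have "u*q+v < u*q+q" using v by simp
      also have "\<dots> = Suc u * q" by simp
      also have "\<dots> \<le> b*q" using u by (intro mult_le_mono1) simp
      finally show ?thesis .
    qed
    show "kron A B $$ (i, u * q + v) * kron C D $$ (u * q + v, j) =
         A $$ (i div p, u) * C $$ (u, j div r) * (B $$ (i mod p, v) * D $$ (v, j mod r))"
      using A B C D i' j' uv u v by (simp add: algebra_simps)
  qed
  also have "\<dots> = (A*C) $$ (i div p, j div r) * (B*D) $$ (i mod p, j mod r)"
    using A B C D ip jr by (simp add: scalar_prod_def sum_product lessThan_atLeast0 row_def col_def)
  also have "\<dots> = kron (A*C) (B*D) $$ (i,j)" using A B C D i' j' by (simp add: kron_def)
  finally show "(kron A B * kron C D) $$ (i,j) = kron (A*C) (B*D) $$ (i,j)" .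
qed (use A B C D in auto)

lemma prod_mset_linear_list: "(\<Prod>a\<in>#mset es. f a) = (\<Prod>a\<leftarrow>es. f a)"
  by (metis mset_map prod_mset_prod_list)

lemma prod_linear_mset_inj:
  "(\<Prod>a\<in>#M. [:-a,1:]) = (\<Prod>a\<in>#M'. [:-(a::'a::idom),1:]) \<Longrightarrow> M = M'"
proof (induction M arbitrary: M')
  case empty
  have "degree (\<Prod>a\<in>#M'. [:-a,1:]) = size M'"
  proof (induction M')
    case (add x M')
    have nz: "(\<Prod>a\<in>#M'. [:-a,1:]) \<noteq> 0" by (auto simp: prod_mset_zero_iff)
    show ?case using add nz by (simp add: degree_mult_eq del: mult_pCons_left)
  qed simp
  with empty show ?case by simp
next
  case (add x M)
  have "poly (\<Prod>a\<in>#M'. [:-a,1:]) x = 0"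
    using add.prems[symmetric] by (simp add: poly_prod_mset)
  hence "x \<in># M'" by (auto simp: poly_prod_mset prod_mset_zero_iff)
  then obtain M'' where M': "M' = add_mset x M''" by (metis multi_member_split)
  from add.prems have "[:-x,1:] * (\<Prod>a\<in>#M. [:-a,1:]) = [:-x,1:] * (\<Prod>a\<in>#M''. [:-a,1:])"
    unfolding M' by simp
  hence "(\<Prod>a\<in>#M. [:-a,1:]) = (\<Prod>a\<in>#M''. [:-a,1:])" by (subst (asm) mult_left_cancel) (simp_all del: mult_pCons_left)
  from add.IH[OF this] show ?case unfolding M' by simp
qed

lemma spectrum_mset_eq: "char_poly A = (\<Prod>a\<leftarrow>es. [:-a,1:]) \<Longrightarrow> spectrum_mset A = mset es"
  unfolding spectrum_mset_def
proof (rule the_equality)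
  assume "char_poly A = (\<Prod>a\<leftarrow>es. [:-a,1:])"
  thus "char_poly A = (\<Prod>a\<in>#mset es. [:-a,1:])" by (simp add: prod_mset_linear_list)
next
  fix M assume "char_poly A = (\<Prod>a\<leftarrow>es. [:-a,1:])" "char_poly A = (\<Prod>a\<in>#M. [:-a,1:])"
  thus "M = mset es" by (intro prod_linear_mset_inj) (simp add: prod_mset_linear_list)
qed

lemma sum_delta_mult1: "(a::nat) < N \<Longrightarrow> (\<Sum>k<N. (if a = k then 1 else 0) * (g k::'a::semiring_1)) = g a"
  by (subst sum.cong[OF refl, of _ _ "\<lambda>k. if k = a then g k else 0"]) auto

lemma sum_delta_mult2: "(a::nat) < N \<Longrightarrow> (\<Sum>k<N. (g k::'a::semiring_1) * (if a = k then 1 else 0)) = g a"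
  by (subst sum.cong[OF refl, of _ _ "\<lambda>k. if k = a then g k else 0"]) auto

lemma char_poly_key_triangular:
  fixes A :: "'a::comm_ring_1 mat"
  assumes A: "A \<in> carrier_mat N N" and f: "bij_betw f {..<N} {..<N}"
    and z: "\<And>a b. a < N \<Longrightarrow> b < N \<Longrightarrow> f b < f a \<Longrightarrow> A $$ (a,b) = 0"
  shows "char_poly A = (\<Prod>a<N. [:-A$$(a,a),1:])"
proof -
  define g where "g = inv_into {..<N} f"
  have g: "bij_betw g {..<N} {..<N}" unfolding g_def by (rule bij_betw_inv_into[OF f])
  have gf: "\<And>a. a < N \<Longrightarrow> g (f a) = a" unfolding g_def using f
    by (simp add: bij_betw_inv_into_left)
  have fg: "\<And>a. a < N \<Longrightarrow> f (g a) = a" unfolding g_def using f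
    by (simp add: bij_betw_inv_into_right)
  have fN: "\<And>a. a < N \<Longrightarrow> f a < N" using f by (auto simp: bij_betw_def)
  have gN: "\<And>a. a < N \<Longrightarrow> g a < N" using g by (auto simp: bij_betw_def)
  define B where "B = mat N N (\<lambda>(i,j). A $$ (g i, g j))"
  define P :: "'a mat" where "P = mat N N (\<lambda>(i,j). if f i = j then 1 else 0)"
  define Q :: "'a mat" where "Q = mat N N (\<lambda>(i,j). if f j = i then 1 else 0)"
  have B: "B \<in> carrier_mat N N" and P: "P \<in> carrier_mat N N" and Q: "Q \<in> carrier_mat N N"
    unfolding B_def P_def Q_def by auto
  have PB: "P * B = mat N N (\<lambda>(i,j). B $$ (f i, j))"
  proof (rule eq_matI)
    fix i j assume "i < dim_row (mat N N (\<lambda>(i,j). B $$ (f i, j)))" "j < dim_col (mat N N (\<lambda>(i,j). B $$ (f i, j)))"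
    hence i: "i < N" and j: "j < N" by auto
    have "(P * B) $$ (i,j) = (\<Sum>k<N. (if f i = k then 1 else 0) * B $$ (k,j))"
      using i j B unfolding P_def by (simp add: scalar_prod_def lessThan_atLeast0)
    also have "\<dots> = B $$ (f i, j)" using fN[OF i] by (rule sum_delta_mult1)
    finally show "(P * B) $$ (i,j) = mat N N (\<lambda>(i,j). B $$ (f i, j)) $$ (i,j)" using i j by simp
  qed (use B P in auto)
  have PBQ: "A = P * B * Q"
  proof (rule eq_matI)
    fix i j assume "i < dim_row (P * B * Q)" "j < dim_col (P * B * Q)"
    hence i: "i < N" and j: "j < N" using P Q by auto
    have "(P * B * Q) $$ (i,j) = (\<Sum>k<N. B $$ (f i, k) * (if f j = k then 1 else 0))"
      using i j B unfolding PB Q_def by (simp add: scalar_prod_def lessThan_atLeast0)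
    also have "\<dots> = B $$ (f i, f j)" using fN[OF j] by (rule sum_delta_mult2)
    also have "\<dots> = A $$ (i,j)" unfolding B_def using i j fN gf by simp
    finally show "A $$ (i,j) = (P * B * Q) $$ (i,j)" by simp
  qed (use A P Q in auto)
  have PQ: "P * Q = 1\<^sub>m N"
  proof (rule eq_matI)
    fix i j assume "i < dim_row (1\<^sub>m N :: 'a mat)" "j < dim_col (1\<^sub>m N :: 'a mat)"
    hence i: "i < N" and j: "j < N" by auto
    have "(P * Q) $$ (i,j) = (\<Sum>k<N. (if f i = k then 1 else 0) * (if f j = k then 1 else 0))"
      using i j unfolding P_def Q_def by (simp add: scalar_prod_def lessThan_atLeast0)
    also have "\<dots> = (if f j = f i then 1 else 0)" using fN[OF i] by (rule sum_delta_mult1)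
    also have "\<dots> = (if i = j then 1 else 0)" using i j gf by metis
    finally show "(P * Q) $$ (i,j) = 1\<^sub>m N $$ (i,j)" using i j by simp
  qed (use P Q in auto)
  have QP: "Q * P = 1\<^sub>m N"
  proof (rule eq_matI)
    fix i j assume "i < dim_row (1\<^sub>m N :: 'a mat)" "j < dim_col (1\<^sub>m N :: 'a mat)"
    hence i: "i < N" and j: "j < N" by auto
    have "(Q * P) $$ (i,j) = (\<Sum>k<N. (if f k = i then 1 else 0) * (if f k = j then 1 else 0))"
      using i j unfolding P_def Q_def by (simp add: scalar_prod_def lessThan_atLeast0)
    also have "\<dots> = (\<Sum>k<N. (if g i = k then 1 else 0) * (if f k = j then 1 else 0))"
      by (intro sum.cong refl) (use gf fg i in auto)
    also have "\<dots> = (if f (g i) = j then 1 else 0)" by (rule sum_delta_mult1[OF gN[OF i]])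
    also have "\<dots> = (if i = j then 1 else 0)" using fg[OF i] by simp
    finally show "(Q * P) $$ (i,j) = 1\<^sub>m N $$ (i,j)" using i j by simp
  qed (use P Q in auto)
  have sim: "similar_mat A B" unfolding similar_mat_def
    by (intro exI[of _ P] exI[of _ Q] similar_mat_witI[OF PQ QP PBQ A B P Q])
  have ut: "upper_triangular B" unfolding upper_triangular_def
  proof (intro allI impI)
    fix i j assume "i < dim_row B" "j < i"
    hence i: "i < N" and j: "j < N" and ji: "j < i" using B by auto
    show "B $$ (i,j) = 0" unfolding B_def using i j ji gN fg
      by (simp add: z)
  qed
  have "char_poly A = char_poly B" by (rule char_poly_similar[OF sim])
  also have "\<dots> = (\<Prod>a\<leftarrow>diag_mat B. [:-a,1:])" by (rule char_poly_upper_triangular[OF B ut])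
  also have "\<dots> = (\<Prod>i<N. [:-A $$ (g i, g i),1:])"
    using B unfolding diag_mat_def B_def
    by (simp add: prod.distinct_set_conv_list[symmetric] lessThan_atLeast0 map_map o_def atLeast_upt)
  also have "\<dots> = (\<Prod>a<N. [:-A$$(a,a),1:])"
    using prod.reindex_bij_betw[OF g, of "\<lambda>a. [:-A$$(a,a),1:]"] by simp
  finally show ?thesis .
qed

lemma real_eigen_of_sym:
  fixes A :: "real mat" and a :: complex
  assumes A: "A \<in> carrier_mat n n" and sym: "\<And>i j. i < n \<Longrightarrow> j < n \<Longrightarrow> A $$ (i,j) = A $$ (j,i)"
    and ev: "eigenvector (map_mat of_real A) v a"
  shows "Im a = 0"
proof -
  let ?Ac = "map_mat complex_of_real A"
  from ev have v: "v \<in> carrier_vec n" and v0: "v \<noteq> 0\<^sub>v n" and eq: "?Ac *\<^sub>v v = a \<cdot>\<^sub>v v"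
    using A unfolding eigenvector_def by auto
  have comp: "\<And>i. i < n \<Longrightarrow> (\<Sum>j<n. of_real (A $$ (i,j)) * v $ j) = a * v $ i"
  proof -
    fix i assume i: "i < n"
    have "(?Ac *\<^sub>v v) $ i = (a \<cdot>\<^sub>v v) $ i" using eq by simp
    thus "(\<Sum>j<n. of_real (A $$ (i,j)) * v $ j) = a * v $ i"
      using i A v by (simp add: scalar_prod_def lessThan_atLeast0 row_def)
  qed
  define T where "T = (\<Sum>i<n. \<Sum>j<n. cnj (v $ i) * of_real (A $$ (i,j)) * v $ j)"
  define W where "W = (\<Sum>i<n. cnj (v $ i) * v $ i)"
  have TW: "T = a * W" unfolding T_def W_def
  proof -
    have "(\<Sum>i<n. \<Sum>j<n. cnj (v $ i) * of_real (A $$ (i,j)) * v $ j) = (\<Sum>i<n. cnj (v $ i) * (\<Sum>j<n. of_real (A $$ (i,j)) * v $ j))"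
      by (simp add: sum_distrib_left mult.assoc)
    also have "\<dots> = (\<Sum>i<n. cnj (v $ i) * (a * v $ i))" using comp by simp
    also have "\<dots> = a * (\<Sum>i<n. cnj (v $ i) * v $ i)" by (simp add: sum_distrib_left algebra_simps)
    finally show "(\<Sum>i<n. \<Sum>j<n. cnj (v $ i) * of_real (A $$ (i,j)) * v $ j) = a * (\<Sum>i<n. cnj (v $ i) * v $ i)" .
  qed
  have "cnj T = (\<Sum>i<n. \<Sum>j<n. v $ i * of_real (A $$ (i,j)) * cnj (v $ j))"
    unfolding T_def by (simp add: cnj_sum)
  also have "\<dots> = (\<Sum>j<n. \<Sum>i<n. v $ i * of_real (A $$ (i,j)) * cnj (v $ j))" by (rule sum.swap)
  also have "\<dots> = T" unfolding T_def
    by (intro sum.cong refl) (simp add: sym mult.commute mult.left_commute)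
  finally have "Im (cnj T) = Im T" by simp
  hence "Im T = 0" by simp
  have Wr: "W = of_real (\<Sum>i<n. (cmod (v $ i))^2)" unfolding W_def
    unfolding of_real_sum by (intro sum.cong refl) (simp only: complex_norm_square mult.commute)
  have "\<exists>i<n. v $ i \<noteq> 0" using v v0 by (metis eq_vecI carrier_vecD index_zero_vec(1) index_zero_vec(2))
  then obtain i0 where i0: "i0 < n" "v $ i0 \<noteq> 0" by auto
  have "(\<Sum>i<n. (cmod (v $ i))^2) > 0"
  proof -
    have "(\<Sum>i<n. (cmod (v $ i))^2) \<ge> (cmod (v $ i0))^2"
      using i0 by (intro member_le_sum) auto
    moreover have "(cmod (v $ i0))^2 > 0" using i0 by simp
    ultimately show ?thesis by linarith
  qed
  with \<open>Im T = 0\<close> show "Im a = 0" unfolding TW Wr by simp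
qed

lemma sym_real_split:
  fixes A :: "real mat"
  assumes A: "A \<in> carrier_mat n n" and sym: "\<And>i j. i < n \<Longrightarrow> j < n \<Longrightarrow> A $$ (i,j) = A $$ (j,i)"
  shows "\<exists>es. char_poly A = (\<Prod>e\<leftarrow>es. [:-e,1:])"
proof -
  let ?Ac = "map_mat complex_of_real A"
  have Ac: "?Ac \<in> carrier_mat n n" using A by simp
  obtain as where as: "char_poly ?Ac = (\<Prod>a\<leftarrow>as. [:-a,1:])"
    using char_poly_factorized[OF Ac] by auto
  have cp: "char_poly ?Ac = map_poly of_real (char_poly A)"
    using of_real_hom.char_poly_hom[OF A] by simp
  have real: "\<And>a. a \<in> set as \<Longrightarrow> a = of_real (Re a)"
  proof -
    fix a assume a: "a \<in> set as"
    have "poly (char_poly ?Ac) a = 0" unfolding as using a by (rule linear_poly_root)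
    hence "eigenvalue ?Ac a" using eigenvalue_root_char_poly[OF Ac] by simp
    then obtain v where "eigenvector ?Ac v a" unfolding eigenvalue_def by auto
    from real_eigen_of_sym[OF A sym this] show "a = of_real (Re a)" by (simp add: complex_eq_iff)
  qed
  interpret R: map_poly_comm_ring_hom "of_real :: real \<Rightarrow> complex" ..
  have "map_poly of_real (\<Prod>e\<leftarrow>map Re as. [:-e,1:]) = (\<Prod>a\<leftarrow>as. [:-a,1:])"
    using real
  proof (induction as)
    case (Cons a as)
    have "map_poly complex_of_real [:-Re a,1:] = [:-a,1:]" using Cons.prems[of a] by simp
    thus ?case using Cons by (simp only: list.map prod_list.Cons R.hom_mult o_def) simp
  qed simp
  hence "map_poly complex_of_real (char_poly A) = map_poly of_real (\<Prod>e\<leftarrow>map Re as. [:-e,1:])"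
    using as cp by simp
  hence "char_poly A = (\<Prod>e\<leftarrow>map Re as. [:-e,1:])"
    by (simp add: poly_eq_iff coeff_map_poly)
  thus ?thesis by blast
qed

lemma schur_ones:
  fixes A :: "real mat"
  assumes A: "A \<in> carrier_mat n n" and n: "0 < n"
    and rows: "\<And>i. i < n \<Longrightarrow> (\<Sum>j<n. A $$ (i,j)) = l"
    and split: "char_poly A = (\<Prod>e\<leftarrow>es. [:-e,1:])"
  shows "\<exists>P Q T es'. similar_mat_wit A T P Q \<and> upper_triangular T \<and> diag_mat T = l # es'
     \<and> (\<forall>i<n. P $$ (i,0) = 1)"
proof -
  define W :: "real mat" where "W = mat n n (\<lambda>(k,j). (if j = 0 then 1 else 0) + (if k = j \<and> j \<noteq> 0 then 1 else 0))"
  define Wi :: "real mat" where "Wi = mat n n (\<lambda>(i,k). (if k = 0 \<and> i \<noteq> 0 then -1 else 0) + (if i = k then 1 else 0))"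
  have W: "W \<in> carrier_mat n n" and Wi: "Wi \<in> carrier_mat n n" unfolding W_def Wi_def by auto
  have WiW: "Wi * W = 1\<^sub>m n"
  proof (rule eq_matI)
    fix i j assume "i < dim_row (1\<^sub>m n :: real mat)" "j < dim_col (1\<^sub>m n :: real mat)"
    hence i: "i < n" and j: "j < n" by auto
    have "(Wi * W) $$ (i,j) = (\<Sum>k<n. ((if k = 0 \<and> i \<noteq> 0 then -1 else 0) + (if i = k then 1 else 0)) *
        ((if j = 0 then 1 else 0) + (if k = j \<and> j \<noteq> 0 then 1 else 0)))"
      using i j unfolding W_def Wi_def by (simp add: scalar_prod_def lessThan_atLeast0)
    also have "\<dots> = (if i = j then 1 else 0)"
    proof (cases "j = 0")
      case True
      have "(\<Sum>k<n. ((if k = 0 \<and> i \<noteq> 0 then -1 else 0) + (if i = k then 1 else 0)) *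
        ((if j = 0 then 1 else 0) + (if k = j \<and> j \<noteq> 0 then 1 else 0))) =
        (\<Sum>k<n. (if k = 0 \<and> i \<noteq> 0 then -1 else 0) + (if i = k then 1 else (0::real)))"
        using True by simp
      also have "\<dots> = (\<Sum>k<n. (if k = 0 \<and> i \<noteq> 0 then -1 else 0)) + (\<Sum>k<n. (if i = k then 1 else (0::real)))"
        by (rule sum.distrib)
      also have "(\<Sum>k<n. (if k = 0 \<and> i \<noteq> 0 then -1 else (0::real))) = (if i \<noteq> 0 then -1 else 0)"
        using n by (cases "i = 0") auto
      also have "(\<Sum>k<n. (if i = k then 1 else (0::real))) = 1" using i by simp
      finally show ?thesis using True by simp
    next
      case False
      have "(\<Sum>k<n. ((if k = 0 \<and> i \<noteq> 0 then -1 else 0) + (if i = k then 1 else 0)) *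
        ((if j = 0 then 1 else 0) + (if k = j \<and> j \<noteq> 0 then 1 else 0))) =
        (\<Sum>k<n. (if k = j then (if i = j then 1 else 0) else (0::real)))"
        using False by (intro sum.cong refl) auto
      also have "\<dots> = (if i = j then 1 else 0)" using j by simp
      finally show ?thesis .
    qed
    finally show "(Wi * W) $$ (i,j) = 1\<^sub>m n $$ (i,j)" using i j by simp
  qed (use W Wi in auto)
  have WWi: "W * Wi = 1\<^sub>m n" by (rule mat_mult_left_right_inverse[OF Wi W WiW])
  define A' where "A' = Wi * A * W"
  have A': "A' \<in> carrier_mat n n" unfolding A'_def using Wi A W by auto
  have simAA': "similar_mat_wit A A' W Wi"
  proof (rule similar_mat_witI[OF WWi WiW _ A A' W Wi])
    have "W * A' * Wi = (W * Wi) * A * (W * Wi)" unfolding A'_def using W Wi A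
      by (simp add: assoc_mult_mat[of _ n n _ n _ n])
    thus "A = W * A' * Wi" using A by (simp add: WWi)
  qed
  have AW0: "\<And>k. k < n \<Longrightarrow> (A * W) $$ (k,0) = l * W $$ (k,0)"
  proof -
    fix k assume k: "k < n"
    have "(A * W) $$ (k,0) = (\<Sum>j<n. A $$ (k,j))" using k n A W unfolding W_def
      by (simp add: scalar_prod_def lessThan_atLeast0)
    thus "(A * W) $$ (k,0) = l * W $$ (k,0)" using rows[OF k] k n unfolding W_def by simp
  qed
  have col0: "\<And>i. i < n \<Longrightarrow> A' $$ (i,0) = (if i = 0 then l else 0)"
  proof -
    fix i assume i: "i < n"
    have "A' $$ (i,0) = (\<Sum>k<n. Wi $$ (i,k) * (A * W) $$ (k,0))"
      unfolding A'_def using i n A W Wi by (simp add: assoc_mult_mat[of _ n n _ n _ n] scalar_prod_def lessThan_atLeast0)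
    also have "\<dots> = l * (\<Sum>k<n. Wi $$ (i,k) * W $$ (k,0))"
      by (simp add: AW0 sum_distrib_left mult.left_commute)
    also have "(\<Sum>k<n. Wi $$ (i,k) * W $$ (k,0)) = (Wi * W) $$ (i,0)"
      using i n W Wi by (simp add: scalar_prod_def lessThan_atLeast0)
    finally show "A' $$ (i,0) = (if i = 0 then l else 0)" using i n by (simp add: WiW)
  qed
  obtain A1 A2 A0 A3 where sb: "split_block A' 1 1 = (A1,A2,A0,A3)" by (cases "split_block A' 1 1") auto
  have dims: "dim_row A' = 1 + (n-1)" "dim_col A' = 1 + (n-1)" using A' n by auto
  note spl = split_block[OF sb dims]
  have A1: "A1 \<in> carrier_mat 1 1" and A2: "A2 \<in> carrier_mat 1 (n-1)" and A3: "A3 \<in> carrier_mat (n-1) (n-1)"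
    and A'eq: "A' = four_block_mat A1 A2 A0 A3" using spl by auto
  have A1id: "A1 = mat 1 1 (\<lambda>_. l)"
    using sb col0 n A' unfolding split_block_def Let_def by (auto intro!: eq_matI)
  have A0id: "A0 = 0\<^sub>m (n-1) 1"
    using sb col0 n A' unfolding split_block_def Let_def by (auto intro!: eq_matI)
  have "char_poly A = char_poly A'" using simAA' char_poly_similar unfolding similar_mat_def by blast
  also have "\<dots> = char_poly A1 * char_poly A3" unfolding A'eq A0id
    by (rule char_poly_four_block_zeros_col[OF A1 A2 A3])
  also have "char_poly A1 = [:-l,1:]" unfolding A1id by (simp add: char_poly_defs det_def sign_def)
  finally have cpA: "char_poly A = [:-l,1:] * char_poly A3" .
  have "eigenvalue A l"
  proof -
    have ne: "vec n (\<lambda>_. (1::real)) \<noteq> 0\<^sub>v n"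
    proof
      assume "vec n (\<lambda>_. (1::real)) = 0\<^sub>v n"
      hence "vec n (\<lambda>_. (1::real)) $ 0 = 0\<^sub>v n $ 0" by simp
      thus False using n by simp
    qed
    have "eigenvector A (vec n (\<lambda>_. 1)) l" unfolding eigenvector_def
      using A n rows ne by (auto intro!: eq_vecI simp: scalar_prod_def lessThan_atLeast0 row_def)
    thus ?thesis unfolding eigenvalue_def by blast
  qed
  hence "poly (char_poly A) l = 0" using eigenvalue_root_char_poly[OF A] by simp
  hence "l \<in> set es" unfolding split by (auto simp: poly_prod_list prod_list_zero_iff)
  hence "mset es = add_mset l (mset (remove1 l es))" by simp
  hence "(\<Prod>e\<leftarrow>es. [:-e,1:]) = [:-l,1:] * (\<Prod>e\<leftarrow>remove1 l es. [:-e,1:])"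
    by (metis (no_types, lifting) mset_map prod_mset.add_mset prod_mset_prod_list image_mset_add_mset)
  hence cpA3: "char_poly A3 = (\<Prod>e\<leftarrow>remove1 l es. [:-e,1:])"
    using cpA split by (subst (asm) mult_left_cancel[symmetric, of "[:-l,1:]"]) (simp_all del: mult_pCons_left)
  obtain B P3 Q3 where sd: "schur_decomposition A3 (remove1 l es) = (B,P3,Q3)"
    by (cases "schur_decomposition A3 (remove1 l es)") auto
  from schur_decomposition[OF A3 cpA3 sd]
  have simA3: "similar_mat_wit A3 B P3 Q3" and utB: "upper_triangular B" and diagB: "diag_mat B = remove1 l es" by auto
  from similar_mat_witD2[OF A3 simA3] have B: "B \<in> carrier_mat (n-1) (n-1)" and P3: "P3 \<in> carrier_mat (n-1) (n-1)"
    and Q3: "Q3 \<in> carrier_mat (n-1) (n-1)" and PQ3: "P3 * Q3 = 1\<^sub>m (n-1)" by auto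
  have A2eq: "A2 = 1\<^sub>m 1 * (A2 * P3) * Q3" using A2 P3 Q3 PQ3
    by (simp add: assoc_mult_mat[of _ 1 "n-1" _ "n-1" _ "n-1"])
  have A0eq: "A0 = P3 * A0 * 1\<^sub>m 1" unfolding A0id using P3 by auto
  have simT: "similar_mat_wit A' (four_block_mat A1 (A2 * P3) A0 B)
    (four_block_mat (1\<^sub>m 1) (0\<^sub>m 1 (n-1)) (0\<^sub>m (n-1) 1) P3) (four_block_mat (1\<^sub>m 1) (0\<^sub>m 1 (n-1)) (0\<^sub>m (n-1) 1) Q3)"
    unfolding A'eq
    by (rule similar_mat_wit_four_block[OF similar_mat_wit_refl[OF A1] simA3 A2eq A0eq A1 A3], insert A0id P3 A2, auto)
  define T where "T = four_block_mat A1 (A2 * P3) A0 B"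
  define P' where "P' = four_block_mat (1\<^sub>m 1) (0\<^sub>m 1 (n-1)) (0\<^sub>m (n-1) 1) P3"
  have sim: "similar_mat_wit A T (W * P') (four_block_mat (1\<^sub>m 1) (0\<^sub>m 1 (n-1)) (0\<^sub>m (n-1) 1) Q3 * Wi)"
    unfolding T_def P'_def by (rule similar_mat_wit_trans[OF simAA' simT])
  have utT: "upper_triangular T" unfolding T_def A0id
    by (rule upper_triangular_four_block[OF A1 B _ utB]) (auto simp: A1id upper_triangular_def)
  have diagT: "diag_mat T = l # remove1 l es" unfolding T_def diag_four_block_mat[OF A1 B] diagB
    by (simp add: A1id diag_mat_def)
  have P': "P' \<in> carrier_mat n n" unfolding P'_def using P3 n by auto
  have P0: "\<forall>i<n. (W * P') $$ (i,0) = 1"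
  proof (intro allI impI)
    fix i assume i: "i < n"
    have "(W * P') $$ (i,0) = (\<Sum>k<n. W $$ (i,k) * P' $$ (k,0))"
      using i n W P' by (simp add: scalar_prod_def lessThan_atLeast0)
    also have "\<dots> = (\<Sum>k<n. W $$ (i,k) * (if 0 = k then 1 else 0))"
      by (intro sum.cong refl) (use P3 n in \<open>auto simp: P'_def\<close>)
    also have "\<dots> = W $$ (i,0)" using n by (subst sum.cong[OF refl, of _ _ "\<lambda>k. if k = 0 then W $$ (i,k) else 0"]) auto
    finally show "(W * P') $$ (i,0) = 1" using i n unfolding W_def by simp
  qed
  show ?thesis using sim utT diagT P0 by blast
qed

lemma seidel_carrier[simp]: "seidel_mat n E \<in> carrier_mat n n"
  unfolding seidel_mat_def all_ones_def adj_mat_def by auto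

lemma seidel_index: "i < n \<Longrightarrow> j < n \<Longrightarrow> seidel_mat n E $$ (i,j) =
   (if i = j then 0 else 1 - 2 * real (card {e\<in>E. i \<in> e \<and> j \<in> e}))"
  unfolding seidel_mat_def all_ones_def adj_mat_def by simp

lemma seidel_sym: "i < n \<Longrightarrow> j < n \<Longrightarrow> seidel_mat n E $$ (i,j) = seidel_mat n E $$ (j,i)"
  by (simp add: seidel_index conj_commute)

lemma double_count:
  assumes "finite F" "finite J"
  shows "(\<Sum>j\<in>J. card {e\<in>F. j \<in> e}) = (\<Sum>e\<in>F. card (e \<inter> J))"
proof -
  have "(\<Sum>j\<in>J. card {e\<in>F. j \<in> e}) = (\<Sum>j\<in>J. \<Sum>e\<in>F. if j \<in> e then 1 else (0::nat))"
    using assms by (intro sum.cong refl) (simp add: sum.If_cases Int_def conj_commute)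
  also have "\<dots> = (\<Sum>e\<in>F. \<Sum>j\<in>J. if j \<in> e then 1 else (0::nat))" by (rule sum.swap)
  also have "\<dots> = (\<Sum>e\<in>F. card (e \<inter> J))"
    using assms by (intro sum.cong refl) (simp add: sum.If_cases Int_def conj_commute)
  finally show ?thesis .
qed

lemma seidel_rowsum:
  assumes reg: "regular_hg k r n E" and i: "i < n"
  shows "(\<Sum>j<n. seidel_mat n E $$ (i,j)) = real n - 1 - 2 * real r * (real k - 1)"
proof -
  from reg have sub: "\<And>e. e \<in> E \<Longrightarrow> e \<subseteq> {0..<n}" and ck: "\<And>e. e \<in> E \<Longrightarrow> card e = k"
    and rr: "card {e\<in>E. i \<in> e} = r"
    using i unfolding regular_hg_def uniform_hg_def hypergraph_def by auto
  have finE: "finite E" using sub by (metis Pow_iff finite_Pow_iff finite_atLeastLessThan finite_subset subsetI)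
  define F where "F = {e\<in>E. i \<in> e}"
  define J where "J = {..<n} - {i}"
  have finF: "finite F" using finE unfolding F_def by simp
  have "(\<Sum>j<n. seidel_mat n E $$ (i,j)) =
      (\<Sum>j<n. (if i = j then 0 else 1)) - 2 * (\<Sum>j<n. if i = j then 0 else real (card {e\<in>E. i \<in> e \<and> j \<in> e}))"
  proof -
    have "(\<Sum>j<n. seidel_mat n E $$ (i,j)) = (\<Sum>j<n. (if i = j then 0 else 1) - 2 * (if i = j then 0 else real (card {e\<in>E. i \<in> e \<and> j \<in> e})))"
      using i by (intro sum.cong refl) (simp add: seidel_index)
    also have "\<dots> = (\<Sum>j<n. (if i = j then 0 else 1)) - (\<Sum>j<n. 2 * (if i = j then 0 else real (card {e\<in>E. i \<in> e \<and> j \<in> e})))"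
      by (rule sum_subtractf)
    finally show ?thesis by (simp add: sum_distrib_left)
  qed
  also have "(\<Sum>j<n. (if i = j then 0 else 1::real)) = real n - 1"
  proof -
    have "{..<n} \<inter> - {i} = {..<n} - {i}" by auto
    moreover have "card ({..<n} - {i}) = n - 1" using i by simp
    ultimately show ?thesis using i by (simp add: sum.If_cases of_nat_diff)
  qed
  also have "(\<Sum>j<n. if i = j then 0 else real (card {e\<in>E. i \<in> e \<and> j \<in> e})) =
      real (\<Sum>j\<in>J. card {e\<in>F. j \<in> e})"
    unfolding of_nat_sum J_def F_def using i
    by (simp add: sum.If_cases Int_def Diff_eq conj_commute conj_left_commute)
  also have "(\<Sum>j\<in>J. card {e\<in>F. j \<in> e}) = (\<Sum>e\<in>F. card (e \<inter> J))"
    by (rule double_count[OF finF]) (simp add: J_def)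
  also have "real (\<Sum>e\<in>F. card (e \<inter> J)) = (\<Sum>e\<in>F. real k - 1)"
    unfolding of_nat_sum
  proof (intro sum.cong refl)
    fix e assume e: "e \<in> F"
    hence eE: "e \<in> E" and ie: "i \<in> e" unfolding F_def by auto
    have "e \<inter> J = e - {i}" using sub[OF eE] unfolding J_def by auto
    moreover have fe: "finite e" using sub[OF eE] finite_subset by blast
    ultimately have "card (e \<inter> J) = k - 1" using ck[OF eE] ie by simp
    moreover have "k \<ge> 1" using ck[OF eE] ie fe by (metis card_0_eq empty_iff less_one not_less)
    ultimately show "real (card (e \<inter> J)) = real k - 1" by simp
  qed
  also have "\<dots> = real r * (real k - 1)" using rr unfolding F_def by simp
  finally show ?thesis by simp
qed

lemma all_ones_carrier[simp]: "all_ones a c \<in> carrier_mat a c"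
  unfolding all_ones_def by simp

lemma all_ones_index[simp]: "i < a \<Longrightarrow> j < c \<Longrightarrow> all_ones a c $$ (i,j) = 1"
  "dim_row (all_ones a c) = a" "dim_col (all_ones a c) = c"
  unfolding all_ones_def by auto

lemma kron_one_left: "X \<in> carrier_mat r c \<Longrightarrow> kron (1\<^sub>m 1) X = X"
  by (intro eq_matI) (auto simp: kron_def)

lemma kron_one_right: "X \<in> carrier_mat r c \<Longrightarrow> kron X (1\<^sub>m 1) = X"
  by (intro eq_matI) (auto simp: kron_def)

lemma kron_one_one: "kron (1\<^sub>m a) (1\<^sub>m c) = 1\<^sub>m (a*c)"
proof (intro eq_matI)
  fix i j assume "i < dim_row (1\<^sub>m (a*c) :: real mat)" "j < dim_col (1\<^sub>m (a*c) :: real mat)"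
  hence i: "i < a*c" and j: "j < a*c" by auto
  have c: "c > 0" using i by (cases c) auto
  have ic: "i div c < a" "j div c < a" using i j div_lt_mult by auto
  have "(i div c = j div c \<and> i mod c = j mod c) = (i = j)"
    by (metis div_mult_mod_eq)
  thus "kron (1\<^sub>m a) (1\<^sub>m c) $$ (i,j) = 1\<^sub>m (a*c) $$ (i,j)"
    using i j ic c by (auto simp: kron_def)
qed auto

lemma ones_left:
  assumes Q: "Q \<in> carrier_mat n n" and P: "P \<in> carrier_mat n n" and QP: "Q * P = 1\<^sub>m n"
    and P0: "\<forall>i<n. P $$ (i,0) = (1::real)" and n: "0 < n"
  shows "Q * all_ones n c = mat n c (\<lambda>(i,j). if i = 0 then 1 else 0)"
proof (rule eq_matI)
  fix i j assume "i < dim_row (mat n c (\<lambda>(i,j). if i = 0 then 1 else (0::real)))" "j < dim_col (mat n c (\<lambda>(i,j). if i = 0 then 1 else (0::real)))"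
  hence i: "i < n" and j: "j < c" by auto
  have "(Q * all_ones n c) $$ (i,j) = (\<Sum>k<n. Q $$ (i,k))"
    using i j Q by (simp add: scalar_prod_def lessThan_atLeast0)
  also have "\<dots> = (\<Sum>k<n. Q $$ (i,k) * P $$ (k,0))" using P0 by simp
  also have "\<dots> = (Q * P) $$ (i,0)" using i n Q P by (simp add: scalar_prod_def lessThan_atLeast0)
  finally show "(Q * all_ones n c) $$ (i,j) = mat n c (\<lambda>(i,j). if i = 0 then 1 else 0) $$ (i,j)"
    using QP i j n by simp
qed (use Q in auto)

lemma e0_mult:
  assumes P: "P \<in> carrier_mat n c"
  shows "mat r n (\<lambda>(i,j). if i = 0 then 1 else 0) * P = mat r c (\<lambda>(i,j). if i = 0 then (\<Sum>k<n. P $$ (k,j)) else (0::real))"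
  using P by (intro eq_matI) (auto simp: scalar_prod_def lessThan_atLeast0)

lemma ones_mult:
  assumes P: "P \<in> carrier_mat n c"
  shows "all_ones r n * P = mat r c (\<lambda>(i,j). (\<Sum>k<n. P $$ (k,j)))"
  using P by (intro eq_matI) (auto simp: scalar_prod_def lessThan_atLeast0)

lemma conj_J:
  assumes Q: "Q \<in> carrier_mat n n" and P: "P \<in> carrier_mat n n" and QP: "Q * P = 1\<^sub>m n"
    and P0: "\<forall>i<n. P $$ (i,0) = (1::real)" and n: "0 < n"
  shows "Q * (all_ones n n - c \<cdot>\<^sub>m 1\<^sub>m n) * P =
     mat n n (\<lambda>(i,j). (if i = 0 then (\<Sum>k<n. P $$ (k,j)) else 0) - (if i = j then c else 0))"
proof -
  have "Q * (all_ones n n - c \<cdot>\<^sub>m 1\<^sub>m n) = Q * all_ones n n - Q * (c \<cdot>\<^sub>m 1\<^sub>m n)"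
    by (rule mult_minus_distrib_mat[OF Q]) auto
  also have "Q * (c \<cdot>\<^sub>m 1\<^sub>m n) = c \<cdot>\<^sub>m Q" using mult_smult_distrib[OF Q one_carrier_mat, of c] Q by simp
  finally have "Q * (all_ones n n - c \<cdot>\<^sub>m 1\<^sub>m n) * P = (Q * all_ones n n - c \<cdot>\<^sub>m Q) * P" by simp
  also have "\<dots> = Q * all_ones n n * P - (c \<cdot>\<^sub>m Q) * P"
    by (rule minus_mult_distrib_mat[of _ n n]) (use Q P in auto)
  also have "(c \<cdot>\<^sub>m Q) * P = c \<cdot>\<^sub>m (Q * P)" by (rule mult_smult_assoc_mat[OF Q P])
  also have "Q * all_ones n n * P = mat n n (\<lambda>(i,j). if i = 0 then (\<Sum>k<n. P $$ (k,j)) else 0)"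
    unfolding ones_left[OF Q P QP P0 n] by (rule e0_mult[OF P])
  finally show ?thesis unfolding QP by (intro eq_matI) auto
qed

definition Lg :: "nat \<Rightarrow> nat \<Rightarrow> (nat \<Rightarrow> real) \<Rightarrow> real mat" where
  "Lg N n s = mat N N (\<lambda>(i,j). (if i = j then 1 else 0) + (if n \<le> i \<and> i < 2*n \<and> j = i - n then s j else 0))"

lemma Lg_carrier[simp]: "Lg N n s \<in> carrier_mat N N" unfolding Lg_def by simp

lemma Lg_index: "a < N \<Longrightarrow> b < N \<Longrightarrow> Lg N n s $$ (a,b) = (if a = b then 1 else 0) + (if n \<le> a \<and> a < 2*n \<and> b = a - n then s b else 0)"
  unfolding Lg_def by simp

lemma mult_Lg_right:
  assumes X: "X \<in> carrier_mat N N" and N: "2*n \<le> N" and n: "0 < n" and a: "a < N" and b: "b < N"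
  shows "(X * Lg N n s) $$ (a,b) = X $$ (a,b) + (if b < n then s b * X $$ (a, b+n) else 0)"
proof -
  have "(X * Lg N n s) $$ (a,b) = (\<Sum>k<N. X $$ (a,k) * ((if k = b then 1 else 0) + (if n \<le> k \<and> k < 2*n \<and> b = k - n then s b else 0)))"
    using X a b unfolding Lg_def by (simp add: scalar_prod_def lessThan_atLeast0)
  also have "\<dots> = (\<Sum>k<N. (if k = b then X $$ (a,k) else 0)) + (\<Sum>k<N. (if k = b + n \<and> b < n then s b * X $$ (a,k) else 0))"
    by (subst sum.distrib[symmetric], intro sum.cong refl) auto
  also have "\<dots> = X $$ (a,b) + (if b < n then s b * X $$ (a, b+n) else 0)"
    using b N by (cases "b < n") (auto simp: sum.delta')
  finally show ?thesis .
qed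

lemma mult_Lg_left:
  assumes X: "X \<in> carrier_mat N N" and N: "2*n \<le> N" and n: "0 < n" and a: "a < N" and b: "b < N"
  shows "(Lg N n s * X) $$ (a,b) = X $$ (a,b) + (if n \<le> a \<and> a < 2*n then s (a-n) * X $$ (a-n, b) else 0)"
proof -
  have "(Lg N n s * X) $$ (a,b) = (\<Sum>k<N. ((if a = k then 1 else 0) + (if n \<le> a \<and> a < 2*n \<and> k = a - n then s k else 0)) * X $$ (k,b))"
    using X a b unfolding Lg_def by (simp add: scalar_prod_def lessThan_atLeast0)
  also have "\<dots> = (\<Sum>k<N. (if k = a then X $$ (k,b) else 0)) + (\<Sum>k<N. (if k = a - n \<and> n \<le> a \<and> a < 2*n then s (a-n) * X $$ (k,b) else 0))"
    by (subst sum.distrib[symmetric], intro sum.cong refl) auto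
  also have "\<dots> = X $$ (a,b) + (if n \<le> a \<and> a < 2*n then s (a-n) * X $$ (a-n, b) else 0)"
    using a N by (cases "n \<le> a \<and> a < 2*n") (auto simp: sum.delta')
  finally show ?thesis .
qed

lemma Lg_inv:
  assumes N: "2*n \<le> N" and n: "0 < n"
  shows "Lg N n (\<lambda>j. - s j) * Lg N n s = 1\<^sub>m N" "Lg N n s * Lg N n (\<lambda>j. - s j) = 1\<^sub>m N"
proof -
  show 1: "Lg N n (\<lambda>j. - s j) * Lg N n s = 1\<^sub>m N"
  proof (rule eq_matI)
    fix a b assume "a < dim_row (1\<^sub>m N :: real mat)" "b < dim_col (1\<^sub>m N :: real mat)"
    hence a: "a < N" and b: "b < N" by auto
    show "(Lg N n (\<lambda>j. - s j) * Lg N n s) $$ (a,b) = 1\<^sub>m N $$ (a,b)"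
    proof (cases "n \<le> a \<and> a < 2*n")
      case True
      have an: "a - n < N" using a by simp
      have "(Lg N n (\<lambda>j. - s j) * Lg N n s) $$ (a,b) = Lg N n s $$ (a,b) + - s (a-n) * Lg N n s $$ (a-n,b)"
        unfolding mult_Lg_left[OF Lg_carrier N n a b] using True by simp
      also have "\<dots> = (if a = b then 1 else 0)"
        unfolding Lg_index[OF a b] Lg_index[OF an b] using True n by (cases "b = a - n") auto
      finally show ?thesis using a b by simp
    next
      case False
      have "(Lg N n (\<lambda>j. - s j) * Lg N n s) $$ (a,b) = Lg N n s $$ (a,b)"
        unfolding mult_Lg_left[OF Lg_carrier N n a b] using False by auto
      thus ?thesis unfolding Lg_index[OF a b] using a b False by auto
    qed
  qed (auto simp: Lg_def)
  show "Lg N n s * Lg N n (\<lambda>j. - s j) = 1\<^sub>m N"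
    by (rule mat_mult_left_right_inverse[OF Lg_carrier Lg_carrier 1])
qed

definition sig :: "real \<Rightarrow> real \<Rightarrow> real \<Rightarrow> real \<Rightarrow> real" where
  "sig p q r s = (if q = 0 then 0 else (s - p + sqrt ((p-s)^2 + 4*q*r)) / (2*q))"

lemma sig_zero:
  assumes qr: "q * r \<ge> 0" and q0: "q = 0 \<Longrightarrow> r = 0"
  shows "r + sig p q r s * s + - sig p q r s * (p + sig p q r s * q) = 0"
proof (cases "q = 0")
  case True thus ?thesis using q0 by (simp add: sig_def)
next
  case False
  define D where "D = (p-s)^2 + 4*q*r"
  have D: "D \<ge> 0" unfolding D_def using qr by (simp add: add_nonneg_nonneg)
  have sq: "sqrt D ^ 2 = D" using D by simp
  define \<sigma> where "\<sigma> = sig p q r s"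
  have w: "\<sigma>*q = (s-p+sqrt D)/2" unfolding \<sigma>_def sig_def D_def using False by (simp add: field_simps)
  have "q * (r + \<sigma>*s + -\<sigma>*(p+\<sigma>*q)) = q*r + (\<sigma>*q)*(s-p) - (\<sigma>*q)^2"
    by (simp add: algebra_simps power2_eq_square)
  also have "\<dots> = q*r + ((s-p+sqrt D)/2)*(s-p) - ((s-p+sqrt D)/2)^2" by (simp only: w)
  also have "\<dots> = (4*q*r + (s-p)^2 - (sqrt D)^2)/4" by (simp add: field_simps power2_eq_square)
  also have "\<dots> = (4*q*r + (s-p)^2 - D)/4" using sq by simp
  also have "\<dots> = 0" unfolding D_def by (simp add: power2_eq_square algebra_simps)
  finally show ?thesis using False unfolding \<sigma>_def by simp
qed

lemma lex_lt:
  fixes x x' y y' m :: nat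
  assumes y: "y \<le> m" and y': "y' \<le> m"
  shows "(x*(m+1)+y < x'*(m+1)+y') = (x < x' \<or> (x = x' \<and> y < y'))"
proof (cases x x' rule: linorder_cases)
  case less
  hence "Suc x * (m+1) \<le> x' * (m+1)" by (intro mult_le_mono1) simp
  thus ?thesis using less y by simp
next
  case greater
  hence "Suc x' * (m+1) \<le> x * (m+1)" by (intro mult_le_mono1) simp
  thus ?thesis using greater y' by simp
qed simp

lemma lin_pair: "[:-x,1:] * [:-y,1:] = [: x*y, -(x+y), (1::real) :]"
  by (simp add: algebra_simps)

lemma sig_pair:
  assumes qr: "q * r \<ge> 0" and q0: "q = 0 \<Longrightarrow> r = 0"
  shows "[:-(p + sig p q r s * q),1:] * [:-(s + - sig p q r s * q),1:] =
    [:-((p + s + sqrt ((p-s)^2 + 4*q*r))/2),1:] * [:-((p + s - sqrt ((p-s)^2 + 4*q*r))/2),1:]"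
proof -
  define \<sigma> where "\<sigma> = sig p q r s"
  define D where "D = (p-s)^2 + 4*q*r"
  have D: "D \<ge> 0" unfolding D_def using qr by (simp add: add_nonneg_nonneg)
  have sq: "sqrt D * sqrt D = D" using D by simp
  have z: "r + \<sigma> * s + - \<sigma> * (p + \<sigma> * q) = 0" unfolding \<sigma>_def by (rule sig_zero[OF qr q0])
  have prod1: "(p + \<sigma> * q) * (s + - \<sigma> * q) = p*s - q*r"
  proof -
    have "(p + \<sigma> * q) * (s + - \<sigma> * q) = p*s + q * (\<sigma> * s + - \<sigma> * (p + \<sigma> * q))" by (simp add: algebra_simps)
    also have "\<sigma> * s + - \<sigma> * (p + \<sigma> * q) = - r" using z by linarith
    finally show ?thesis by simp
  qed
  have prod2: "((p + s + sqrt D)/2) * ((p + s - sqrt D)/2) = p*s - q*r"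
    using sq unfolding D_def by (simp add: field_simps power2_eq_square)
  show ?thesis unfolding lin_pair \<sigma>_def[symmetric] D_def[symmetric] using prod1 prod2
    by (simp add: field_simps)
qed

lemma prod_split_add: "prod g {..<n + (k::nat)} = prod g {..<n} * (\<Prod>c<k. g (n + c))"
  by (induction k) (auto simp: algebra_simps)

lemma prod_mult_idx: "(\<Prod>k<a*(b::nat). f k) = (\<Prod>p<a. \<Prod>q<b. f (p*b+q))"
proof -
  have s: "\<And>k. prod f {k..<k+b} = (\<Prod>q<b. f (k+q))" by (induct_tac b) (auto simp: add.commute)
  show ?thesis using prod.nat_group[of f b a, symmetric] by (simp add: s)
qed

lemma prod_mset_repeat: "(\<Prod>x\<in>#repeat_mset n M. f x) = (\<Prod>x\<in>#M. f x) ^ n"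
  by (induction n) auto

lemma spectrum_mset_eq_mset: "char_poly A = (\<Prod>a\<in>#M. [:-a,1:]) \<Longrightarrow> spectrum_mset A = M"
  unfolding spectrum_mset_def
  by (rule the_equality) (auto intro: prod_linear_mset_inj)

lemma prod_list_upt_shift: "(\<Prod>x\<leftarrow>map f [Suc 0..<n]. g x) = (\<Prod>t<n-1. g (f (Suc t)))"
proof -
  have "map f [Suc 0..<n] = map (\<lambda>t. f (Suc t)) [0..<n-1]"
  proof (cases n)
    case (Suc k)
    have "[Suc 0..<n] = map Suc [0..<k]" unfolding Suc map_Suc_upt by simp
    thus ?thesis using Suc by simp
  qed simp
  thus ?thesis by (simp add: prod.distinct_set_conv_list[symmetric] atLeast_upt[symmetric] lessThan_atLeast0 o_def)
qed

lemma corona_main: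
  fixes S0 S1 :: "real mat" and n m :: nat and b l0 l1 :: real
  assumes n: "0 < n" and m: "0 < m"
    and S0: "S0 \<in> carrier_mat n n" and S1: "S1 \<in> carrier_mat m m"
    and sym0: "\<And>i j. i < n \<Longrightarrow> j < n \<Longrightarrow> S0 $$ (i,j) = S0 $$ (j,i)"
    and sym1: "\<And>i j. i < m \<Longrightarrow> j < m \<Longrightarrow> S1 $$ (i,j) = S1 $$ (j,i)"
    and row0: "\<And>i. i < n \<Longrightarrow> (\<Sum>j<n. S0 $$ (i,j)) = l0"
    and row1: "\<And>i. i < m \<Longrightarrow> (\<Sum>j<m. S1 $$ (i,j)) = l1"
  shows "\<exists>es0 es1. spectrum_mset S0 = mset (l0 # es0) \<and> spectrum_mset S1 = mset (l1 # es1) \<and>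
    spectrum_mset (four_block_mat S0 (kron (all_ones 1 m) (all_ones n n - (2*b) \<cdot>\<^sub>m 1\<^sub>m n))
                        (kron (all_ones m 1) (all_ones n n - (2*b) \<cdot>\<^sub>m 1\<^sub>m n))
                        (kron (all_ones m m) (all_ones n n - 1\<^sub>m n) + kron S1 (1\<^sub>m n)))
    = image_mset (\<lambda>\<mu>. (\<mu> + (l1 - real m) + sqrt ((\<mu> - (l1 - real m))^2 + 16 * real m * b^2)) / 2) (mset es0)
    + image_mset (\<lambda>\<mu>. (\<mu> + (l1 - real m) - sqrt ((\<mu> - (l1 - real m))^2 + 16 * real m * b^2)) / 2) (mset es0)
    + repeat_mset n (mset es1)
    + {# (l0 + (real m * (real n - 1) + l1) + sqrt ((l0 - (real m * (real n - 1) + l1))^2 + 4 * real m * (real n - 2*b)^2)) / 2,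
         (l0 + (real m * (real n - 1) + l1) - sqrt ((l0 - (real m * (real n - 1) + l1))^2 + 4 * real m * (real n - 2*b)^2)) / 2 #}"
proof -
  obtain es0' where cp0': "char_poly S0 = (\<Prod>e\<leftarrow>es0'. [:-e,1:])" using sym_real_split[OF S0 sym0] by auto
  obtain es1' where cp1': "char_poly S1 = (\<Prod>e\<leftarrow>es1'. [:-e,1:])" using sym_real_split[OF S1 sym1] by auto
  obtain P0 Q0 T0 es0 where sim0: "similar_mat_wit S0 T0 P0 Q0" and ut0: "upper_triangular T0"
    and dg0: "diag_mat T0 = l0 # es0" and P00: "\<forall>i<n. P0 $$ (i,0) = 1"
    using schur_ones[OF S0 n row0 cp0'] by blast
  obtain P1 Q1 T1 es1 where sim1: "similar_mat_wit S1 T1 P1 Q1" and ut1: "upper_triangular T1"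
    and dg1: "diag_mat T1 = l1 # es1" and P10: "\<forall>i<m. P1 $$ (i,0) = 1"
    using schur_ones[OF S1 m row1 cp1'] by blast
  from similar_mat_witD2[OF S0 sim0] have P0Q0: "P0 * Q0 = 1\<^sub>m n" and Q0P0: "Q0 * P0 = 1\<^sub>m n"
    and S0eq: "S0 = P0 * T0 * Q0" and T0: "T0 \<in> carrier_mat n n" and P0: "P0 \<in> carrier_mat n n"
    and Q0: "Q0 \<in> carrier_mat n n" by auto
  from similar_mat_witD2[OF S1 sim1] have P1Q1: "P1 * Q1 = 1\<^sub>m m" and Q1P1: "Q1 * P1 = 1\<^sub>m m"
    and S1eq: "S1 = P1 * T1 * Q1" and T1: "T1 \<in> carrier_mat m m" and P1: "P1 \<in> carrier_mat m m"
    and Q1: "Q1 \<in> carrier_mat m m" by auto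
  have spec0: "spectrum_mset S0 = mset (l0 # es0)"
  proof (rule spectrum_mset_eq)
    have "char_poly S0 = char_poly T0" using sim0 char_poly_similar unfolding similar_mat_def by blast
    thus "char_poly S0 = (\<Prod>a\<leftarrow>l0 # es0. [:-a,1:])" using char_poly_upper_triangular[OF T0 ut0] dg0 by simp
  qed
  have spec1: "spectrum_mset S1 = mset (l1 # es1)"
  proof (rule spectrum_mset_eq)
    have "char_poly S1 = char_poly T1" using sim1 char_poly_similar unfolding similar_mat_def by blast
    thus "char_poly S1 = (\<Prod>a\<leftarrow>l1 # es1. [:-a,1:])" using char_poly_upper_triangular[OF T1 ut1] dg1 by simp
  qed
  have dgl0: "l0 # es0 = map (\<lambda>i. T0 $$ (i,i)) [0..<n]" using dg0 T0 unfolding diag_mat_def by simp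
  hence T000: "T0 $$ (0,0) = l0" and es0eq: "es0 = map (\<lambda>i. T0 $$ (i,i)) [Suc 0..<n]"
    using n by (simp_all add: upt_conv_Cons)
  have dgl1: "l1 # es1 = map (\<lambda>i. T1 $$ (i,i)) [0..<m]" using dg1 T1 unfolding diag_mat_def by simp
  hence T100: "T1 $$ (0,0) = l1" and es1eq: "es1 = map (\<lambda>i. T1 $$ (i,i)) [Suc 0..<m]"
    using m by (simp_all add: upt_conv_Cons)
  have T0z: "\<And>i j. i < n \<Longrightarrow> j < i \<Longrightarrow> T0 $$ (i,j) = 0" using ut0 T0 unfolding upper_triangular_def by auto
  have T1z: "\<And>i j. i < m \<Longrightarrow> j < i \<Longrightarrow> T1 $$ (i,j) = 0" using ut1 T1 unfolding upper_triangular_def by auto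
  define C where "C = all_ones n n - (2*b) \<cdot>\<^sub>m 1\<^sub>m n"
  define JI where "JI = all_ones n n - 1\<^sub>m n"
  have C: "C \<in> carrier_mat n n" and JI: "JI \<in> carrier_mat n n" unfolding C_def JI_def by auto
  define u where "u = (\<lambda>j. \<Sum>k<n. P0 $$ (k,j))"
  define v where "v = (\<lambda>j. \<Sum>k<m. P1 $$ (k,j))"
  have u0: "u 0 = real n" unfolding u_def using P00 by simp
  have v0: "v 0 = real m" unfolding v_def using P10 by simp
  define X0 where "X0 = (\<lambda>i j. (if i = 0 then u j else 0) - (if i = j then 2*b else 0))"
  define Y0 where "Y0 = (\<lambda>i j. (if i = 0 then u j else 0) - (if i = j then 1 else (0::real)))"
  have X0m: "Q0 * C * P0 = mat n n (\<lambda>(i,j). X0 i j)"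
    unfolding C_def X0_def u_def by (rule conj_J[OF Q0 P0 Q0P0 P00 n])
  have Y0m: "Q0 * JI * P0 = mat n n (\<lambda>(i,j). Y0 i j)"
  proof -
    have "JI = all_ones n n - 1 \<cdot>\<^sub>m 1\<^sub>m n" unfolding JI_def by (intro eq_matI) auto
    thus ?thesis unfolding Y0_def u_def using conj_J[OF Q0 P0 Q0P0 P00 n, of 1] by simp
  qed
  have Vr: "all_ones 1 m * P1 = mat 1 m (\<lambda>(i,j). v j)" unfolding v_def by (rule ones_mult[OF P1])
  have E1c: "Q1 * all_ones m 1 = mat m 1 (\<lambda>(i,j). if i = 0 then 1 else 0)" by (rule ones_left[OF Q1 P1 Q1P1 P10 m])
  have Z1m: "Q1 * all_ones m m * P1 = mat m m (\<lambda>(i,j). if i = 0 then v j else 0)"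
    unfolding ones_left[OF Q1 P1 Q1P1 P10 m] v_def by (rule e0_mult[OF P1])
  have T1eq: "Q1 * S1 * P1 = T1"
  proof -
    have "Q1 * S1 * P1 = (Q1 * P1) * T1 * (Q1 * P1)" unfolding S1eq using Q1 P1 T1
      by (simp add: assoc_mult_mat[of _ m m _ m _ m])
    thus ?thesis using T1 by (simp add: Q1P1)
  qed
  define kP where "kP = kron P1 P0"
  define kQ where "kQ = kron Q1 Q0"
  have kP: "kP \<in> carrier_mat (m*n) (m*n)" and kQ: "kQ \<in> carrier_mat (m*n) (m*n)"
    unfolding kP_def kQ_def using P1 P0 Q1 Q0 by auto
  have kQkP: "kQ * kP = 1\<^sub>m (m*n)" unfolding kP_def kQ_def
    by (simp add: kron_mult[OF Q1 Q0 P1 P0] Q1P1 Q0P0 kron_one_one)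
  have kPkQ: "kP * kQ = 1\<^sub>m (m*n)" unfolding kP_def kQ_def
    by (simp add: kron_mult[OF P1 P0 Q1 Q0] P1Q1 P0Q0 kron_one_one)
  define BR where "BR = kron (all_ones m m) JI + kron S1 (1\<^sub>m n)"
  have BR: "BR \<in> carrier_mat (m*n) (m*n)" unfolding BR_def using JI S1 by auto
  define BR' where "BR' = kQ * BR * kP"
  have BR': "BR' \<in> carrier_mat (m*n) (m*n)" unfolding BR'_def using kQ BR kP by auto
  define URA where "URA = kron (all_ones 1 m) C"
  define LLA where "LLA = kron (all_ones m 1) C"
  have URA: "URA \<in> carrier_mat n (m*n)" unfolding URA_def using C kron_carrier_mat[OF all_ones_carrier C, of 1 m] by simp
  have LLA: "LLA \<in> carrier_mat (m*n) n" unfolding LLA_def using C kron_carrier_mat[OF all_ones_carrier C, of m 1] by simp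
  define UR where "UR = Q0 * URA * kP"
  define LL where "LL = kQ * LLA * P0"
  have UR: "UR \<in> carrier_mat n (m*n)" unfolding UR_def using Q0 URA kP by auto
  have LL: "LL \<in> carrier_mat (m*n) n" unfolding LL_def using kQ LLA P0 by auto
  have simBR: "similar_mat_wit BR BR' kP kQ"
  proof (rule similar_mat_witI[OF kPkQ kQkP _ BR BR' kP kQ])
    have "kP * BR' * kQ = (kP * kQ) * BR * (kP * kQ)" unfolding BR'_def using kP kQ BR
      by (simp add: assoc_mult_mat[of _ "m*n" "m*n" _ "m*n" _ "m*n"])
    thus "BR = kP * BR' * kQ" using BR by (simp add: kPkQ)
  qed
  have URAeq: "URA = P0 * UR * kQ"
  proof -
    have QU: "Q0 * URA \<in> carrier_mat n (m*n)" using Q0 URA by auto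
    have "P0 * UR * kQ = P0 * (Q0 * URA * kP * kQ)" unfolding UR_def using P0 QU kP kQ
      by (metis assoc_mult_mat mult_carrier_mat)
    also have "Q0 * URA * kP * kQ = Q0 * URA * (kP * kQ)" using QU kP kQ by (rule assoc_mult_mat)
    also have "\<dots> = Q0 * URA" using QU by (simp add: kPkQ right_mult_one_mat)
    also have "P0 * (Q0 * URA) = (P0 * Q0) * URA" using P0 Q0 URA by (simp add: assoc_mult_mat[of _ n n _ n _ "m*n"])
    finally show ?thesis using URA by (simp add: P0Q0)
  qed
  have LLAeq: "LLA = kP * LL * Q0"
  proof -
    have W: "kQ * LLA \<in> carrier_mat (m*n) n" using kQ LLA by auto
    have "kP * LL * Q0 = (kP * (kQ * LLA)) * P0 * Q0" unfolding LL_def using W kP P0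
      by (metis assoc_mult_mat)
    also have "\<dots> = (kP * (kQ * LLA)) * (P0 * Q0)" using W kP P0 Q0 by (metis assoc_mult_mat mult_carrier_mat)
    also have "\<dots> = kP * (kQ * LLA)" unfolding P0Q0 by (rule right_mult_one_mat[of _ "m*n"]) (use W kP in auto)
    also have "\<dots> = (kP * kQ) * LLA" using kP kQ LLA by (simp add: assoc_mult_mat[of _ "m*n" "m*n" _ "m*n" _ n])
    finally show ?thesis using LLA by (simp add: kPkQ)
  qed
  define R where "R = four_block_mat T0 UR LL BR'"
  define Sc where "Sc = four_block_mat S0 URA LLA BR"
  have simR: "similar_mat Sc R" unfolding Sc_def R_def similar_mat_def
    using similar_mat_wit_four_block[OF sim0 simBR URAeq LLAeq S0 BR LL UR] by blast
  have URf: "UR = kron (mat 1 m (\<lambda>(i,j). v j)) (mat n n (\<lambda>(i,j). X0 i j))"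
  proof -
    have "UR = kron (1\<^sub>m 1) Q0 * kron (all_ones 1 m) C * kron P1 P0"
      unfolding UR_def URA_def kP_def kron_one_left[OF Q0] ..
    also have "kron (1\<^sub>m 1) Q0 * kron (all_ones 1 m) C = kron (1\<^sub>m 1 * all_ones 1 m) (Q0 * C)"
      by (rule kron_mult[OF one_carrier_mat Q0 all_ones_carrier C])
    also have "1\<^sub>m 1 * all_ones 1 m = all_ones 1 m" by (rule left_mult_one_mat[OF all_ones_carrier])
    also have "kron (all_ones 1 m) (Q0 * C) * kron P1 P0 = kron (all_ones 1 m * P1) (Q0 * C * P0)"
      by (rule kron_mult[OF all_ones_carrier _ P1 P0]) (use Q0 C in auto)
    finally show ?thesis unfolding Vr X0m .
  qed
  have LLf: "LL = kron (mat m 1 (\<lambda>(i,j). if i = 0 then 1 else 0)) (mat n n (\<lambda>(i,j). X0 i j))"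
  proof -
    have "LL = kron Q1 Q0 * kron (all_ones m 1) C * kron (1\<^sub>m 1) P0"
      unfolding LL_def LLA_def kQ_def kron_one_left[OF P0] ..
    also have "kron Q1 Q0 * kron (all_ones m 1) C = kron (Q1 * all_ones m 1) (Q0 * C)"
      by (rule kron_mult[OF Q1 Q0 all_ones_carrier C])
    also have "kron (Q1 * all_ones m 1) (Q0 * C) * kron (1\<^sub>m 1) P0 = kron (Q1 * all_ones m 1 * 1\<^sub>m 1) (Q0 * C * P0)"
      by (rule kron_mult[OF _ _ one_carrier_mat P0]) (use Q1 Q0 C in auto)
    also have "Q1 * all_ones m 1 * 1\<^sub>m 1 = Q1 * all_ones m 1" by (rule right_mult_one_mat[of _ m]) (use Q1 in auto)
    finally show ?thesis unfolding E1c X0m .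
  qed
  have BRf: "BR' = kron (mat m m (\<lambda>(i,j). if i = 0 then v j else 0)) (mat n n (\<lambda>(i,j). Y0 i j)) + kron T1 (1\<^sub>m n)"
  proof -
    have k1: "kron (all_ones m m) JI \<in> carrier_mat (m*n) (m*n)" using JI by auto
    have k2: "kron S1 (1\<^sub>m n) \<in> carrier_mat (m*n) (m*n)" using S1 by auto
    have "kQ * BR = kQ * kron (all_ones m m) JI + kQ * kron S1 (1\<^sub>m n)"
      unfolding BR_def by (rule mult_add_distrib_mat[OF kQ k1 k2])
    also have "kQ * kron (all_ones m m) JI = kron (Q1 * all_ones m m) (Q0 * JI)"
      unfolding kQ_def by (rule kron_mult[OF Q1 Q0 all_ones_carrier JI])
    also have "kQ * kron S1 (1\<^sub>m n) = kron (Q1 * S1) (Q0 * 1\<^sub>m n)"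
      unfolding kQ_def by (rule kron_mult[OF Q1 Q0 S1 one_carrier_mat])
    finally have "BR' = (kron (Q1 * all_ones m m) (Q0 * JI) + kron (Q1 * S1) (Q0 * 1\<^sub>m n)) * kP"
      unfolding BR'_def by simp
    also have "\<dots> = kron (Q1 * all_ones m m) (Q0 * JI) * kP + kron (Q1 * S1) (Q0 * 1\<^sub>m n) * kP"
      by (rule add_mult_distrib_mat[OF _ _ kP]) (use Q1 Q0 JI S1 in auto)
    also have "kron (Q1 * all_ones m m) (Q0 * JI) * kP = kron (Q1 * all_ones m m * P1) (Q0 * JI * P0)"
      unfolding kP_def by (rule kron_mult[OF _ _ P1 P0]) (use Q1 Q0 JI in auto)
    also have "kron (Q1 * S1) (Q0 * 1\<^sub>m n) * kP = kron (Q1 * S1 * P1) (Q0 * 1\<^sub>m n * P0)"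
      unfolding kP_def by (rule kron_mult[OF _ _ P1 P0]) (use Q1 Q0 S1 in auto)
    also have "Q0 * 1\<^sub>m n * P0 = 1\<^sub>m n" using Q0 by (simp add: Q0P0 right_mult_one_mat)
    finally show ?thesis unfolding Z1m Y0m T1eq .
  qed
  define N where "N = n + m*n"
  define Rf where "Rf = (\<lambda>a b. if a < n then (if b < n then T0 $$ (a,b) else v ((b-n) div n) * X0 a ((b-n) mod n))
     else if b < n then (if (a-n) div n = 0 then 1 else 0) * X0 ((a-n) mod n) b
     else (if (a-n) div n = 0 then v ((b-n) div n) else 0) * Y0 ((a-n) mod n) ((b-n) mod n)
       + T1 $$ ((a-n) div n, (b-n) div n) * (if (a-n) mod n = (b-n) mod n then 1 else 0))"
  have R: "R \<in> carrier_mat N N" unfolding R_def N_def using T0 BR' by auto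
  have Rent: "\<And>a b. a < N \<Longrightarrow> b < N \<Longrightarrow> R $$ (a,b) = Rf a b"
  proof -
    fix a b assume a: "a < N" and b: "b < N"
    have dm: "\<And>x. x < m * n \<Longrightarrow> x div n < m \<and> x mod n < n" using n div_lt_mult by auto
    show "R $$ (a,b) = Rf a b"
    proof (cases "a < n")
      case True
      show ?thesis
      proof (cases "b < n")
        case True
        thus ?thesis using \<open>a < n\<close> T0 BR' unfolding R_def Rf_def by simp
      next
        case False
        have b': "b - n < m * n" using b False unfolding N_def by simp
        thus ?thesis using \<open>a < n\<close> False T0 BR' dm[OF b'] n unfolding R_def Rf_def URf by simp
      qed
    next
      case False
      have a': "a - n < m * n" using a False unfolding N_def by simp
      show ?thesis
      proof (cases "b < n")
        case True
        thus ?thesis using a' False T0 BR' dm[OF a'] n unfolding R_def Rf_def LLf by simp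
      next
        case bF: False
        have b': "b - n < m * n" using b bF unfolding N_def by simp
        thus ?thesis using a' False bF T0 BR' T1 dm[OF a'] dm[OF b'] n unfolding R_def Rf_def BRf by simp
      qed
    qed
  qed
  have N2: "2*n \<le> N" unfolding N_def using m by (simp add: mult_2)
  define p where "p = (\<lambda>t. T0 $$ (t,t))"
  define q where "q = (\<lambda>t. real m * X0 t t)"
  define r where "r = (\<lambda>t. X0 t t)"
  define s where "s = (\<lambda>t. real m * Y0 t t + l1)"
  define \<sigma> where "\<sigma> = (\<lambda>t. sig (p t) (q t) (r t) (s t))"
  have qr: "\<And>t. q t * r t \<ge> 0" unfolding q_def r_def mult.assoc by (intro mult_nonneg_nonneg zero_le_square) simp
  have q0: "\<And>t. q t = 0 \<Longrightarrow> r t = 0" unfolding q_def r_def using m by simp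
  have Rpq: "\<And>t. t < n \<Longrightarrow> R $$ (t,t) = p t \<and> R $$ (t, t+n) = q t \<and> R $$ (t+n, t) = r t \<and> R $$ (t+n,t+n) = s t"
  proof -
    fix t assume t: "t < n"
    have tN: "t < N" "t + n < N" using t m unfolding N_def by (auto simp: add_less_le_mono)
    show "R $$ (t,t) = p t \<and> R $$ (t, t+n) = q t \<and> R $$ (t+n, t) = r t \<and> R $$ (t+n,t+n) = s t"
      unfolding Rent[OF tN(1) tN(1)] Rent[OF tN(1) tN(2)] Rent[OF tN(2) tN(1)] Rent[OF tN(2) tN(2)]
      using t v0 T100 unfolding Rf_def p_def q_def r_def s_def by simp
  qed
  define R' where "R' = Lg N n (\<lambda>j. - \<sigma> j) * R * Lg N n \<sigma>"
  define Y where "Y = (\<lambda>a b. R $$ (a,b) + (if b < n then \<sigma> b * R $$ (a, b+n) else 0))"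
  have R'ent: "\<And>a b. a < N \<Longrightarrow> b < N \<Longrightarrow> R' $$ (a,b) = Y a b + (if n \<le> a \<and> a < 2*n then - \<sigma> (a-n) * Y (a-n) b else 0)"
  proof -
    fix a b assume a: "a < N" and b: "b < N"
    have RL: "R * Lg N n \<sigma> \<in> carrier_mat N N" using R by auto
    have "R' = Lg N n (\<lambda>j. - \<sigma> j) * (R * Lg N n \<sigma>)" unfolding R'_def using R
      by (simp add: assoc_mult_mat[of _ N N _ N _ N])
    hence "R' $$ (a,b) = (R * Lg N n \<sigma>) $$ (a,b) + (if n \<le> a \<and> a < 2*n then - \<sigma> (a-n) * (R * Lg N n \<sigma>) $$ (a-n,b) else 0)"
      using mult_Lg_left[OF RL N2 n a b] by simp
    moreover have "(R * Lg N n \<sigma>) $$ (a,b) = Y a b" unfolding Y_def by (rule mult_Lg_right[OF R N2 n a b])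
    moreover have "n \<le> a \<Longrightarrow> (R * Lg N n \<sigma>) $$ (a-n,b) = Y (a-n) b" unfolding Y_def
      using a by (intro mult_Lg_right[OF R N2 n _ b]) simp
    ultimately show "R' $$ (a,b) = Y a b + (if n \<le> a \<and> a < 2*n then - \<sigma> (a-n) * Y (a-n) b else 0)" by auto
  qed
  have R': "R' \<in> carrier_mat N N" unfolding R'_def using R by (metis Lg_carrier mult_carrier_mat)
  have simR2: "similar_mat R R'" unfolding similar_mat_def
  proof (intro exI)
    show "similar_mat_wit R R' (Lg N n \<sigma>) (Lg N n (\<lambda>j. - \<sigma> j))"
    proof (rule similar_mat_witI[OF Lg_inv(2)[OF N2 n] Lg_inv(1)[OF N2 n] _ R R' Lg_carrier Lg_carrier])
      define La where "La = Lg N n \<sigma>"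
      define Lb where "Lb = Lg N n (\<lambda>j. - \<sigma> j)"
      have La: "La \<in> carrier_mat N N" and Lb: "Lb \<in> carrier_mat N N" unfolding La_def Lb_def by auto
      have ab: "La * Lb = 1\<^sub>m N" unfolding La_def Lb_def by (rule Lg_inv(2)[OF N2 n])
      have LbR: "Lb * R \<in> carrier_mat N N" using Lb R by auto
      have "La * R' = La * ((Lb * R) * La)" unfolding R'_def La_def Lb_def ..
      also have "\<dots> = (La * (Lb * R)) * La" using La LbR by (simp add: assoc_mult_mat[of _ N N _ N _ N])
      also have "La * (Lb * R) = (La * Lb) * R" using La Lb R by (simp add: assoc_mult_mat[of _ N N _ N _ N])
      also have "\<dots> = R" using R by (simp add: ab)
      finally have "La * R' * Lb = R * La * Lb" by simp
      also have "\<dots> = R * (La * Lb)" using R La Lb by (simp add: assoc_mult_mat[of _ N N _ N _ N])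
      also have "\<dots> = R" using R by (simp add: ab)
      finally show "R = Lg N n \<sigma> * R' * Lg N n (\<lambda>j. - \<sigma> j)" unfolding La_def Lb_def by simp
    qed
  qed
  define tt where "tt = (\<lambda>a. if a < n then a else (a-n) mod n)"
  define Lv where "Lv = (\<lambda>a. if a < n then 0 else (a-n) div n + 1)"
  define f where "f = (\<lambda>a. tt a * (m+1) + Lv a)"
  have ttN: "\<And>a. tt a < n" unfolding tt_def using n by simp
  have LvN: "\<And>a. a < N \<Longrightarrow> Lv a \<le> m"
  proof -
    fix a assume a: "a < N"
    show "Lv a \<le> m"
    proof (cases "a < n")
      case False
      hence "a - n < m * n" using a unfolding N_def by simp
      hence "(a-n) div n < m" by (rule div_lt_mult)
      thus ?thesis using False unfolding Lv_def by simp
    qed (simp add: Lv_def)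
  qed
  have recon: "\<And>a. a = (if Lv a = 0 then tt a else n + (Lv a - 1)*n + tt a)"
    unfolding Lv_def tt_def by simp
  have flt: "\<And>a b. a < N \<Longrightarrow> b < N \<Longrightarrow> f b < f a \<longleftrightarrow> (tt b < tt a \<or> (tt b = tt a \<and> Lv b < Lv a))"
    unfolding f_def by (intro lex_lt LvN)
  have finj: "inj_on f {..<N}"
  proof (rule inj_onI)
    fix a b assume a: "a \<in> {..<N}" and b: "b \<in> {..<N}" and fab: "f a = f b"
    have "tt a = tt b \<and> Lv a = Lv b" using flt[of a b] flt[of b a] a b fab by auto
    thus "a = b" using recon[of a] recon[of b] by metis
  qed
  have fN: "\<And>a. a < N \<Longrightarrow> f a < N"
  proof -
    fix a assume a: "a < N"
    have "tt a \<le> n - 1" using ttN[of a] by simp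
    hence "tt a * (m+1) \<le> (n-1) * (m+1)" by (rule mult_le_mono1)
    moreover have "(n-1) * (m+1) + m < N" unfolding N_def using n
      by (cases n) (auto simp: algebra_simps)
    ultimately show "f a < N" unfolding f_def using LvN[OF a] by linarith
  qed
  have fbij: "bij_betw f {..<N} {..<N}"
  proof -
    have "f ` {..<N} \<subseteq> {..<N}" using fN by auto
    hence "f ` {..<N} = {..<N}" using endo_inj_surj[OF _ _ finj] by simp
    thus ?thesis using finj unfolding bij_betw_def by simp
  qed
  have Zr: "\<And>a b. a < N \<Longrightarrow> b < N \<Longrightarrow> (tt b < tt a \<or> (tt b = tt a \<and> Lv b < Lv a \<and> \<not> (Lv a = 1 \<and> Lv b = 0))) \<Longrightarrow> R $$ (a,b) = 0"
  proof -
    fix a b assume a: "a < N" and b: "b < N" and c: "tt b < tt a \<or> (tt b = tt a \<and> Lv b < Lv a \<and> \<not> (Lv a = 1 \<and> Lv b = 0))"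
    show "R $$ (a,b) = 0" unfolding Rent[OF a b]
    proof (cases "a < n")
      case True
      show "Rf a b = 0"
      proof (cases "b < n")
        case True
        hence "b < a" using c \<open>a < n\<close> unfolding tt_def Lv_def by auto
        thus ?thesis using True \<open>a < n\<close> T0z unfolding Rf_def by simp
      next
        case False
        hence "(b-n) mod n < a" using c \<open>a < n\<close> unfolding tt_def Lv_def by auto
        thus ?thesis using False \<open>a < n\<close> unfolding Rf_def X0_def by auto
      qed
    next
      case aF: False
      have ja: "(a-n) div n < m" using a aF div_lt_mult unfolding N_def by simp
      show "Rf a b = 0"
      proof (cases "b < n")
        case True
        show ?thesis
        proof (cases "(a-n) div n = 0")
          case True
          hence "b < (a-n) mod n" using c \<open>b < n\<close> aF unfolding tt_def Lv_def by auto
          thus ?thesis using \<open>b < n\<close> aF unfolding Rf_def X0_def by auto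
        next
          case False
          thus ?thesis using \<open>b < n\<close> aF unfolding Rf_def by simp
        qed
      next
        case bF: False
        have c': "(b-n) mod n < (a-n) mod n \<or> ((b-n) mod n = (a-n) mod n \<and> (b-n) div n < (a-n) div n)"
          using c aF bF unfolding tt_def Lv_def by auto
        thus ?thesis
        proof
          assume lt: "(b-n) mod n < (a-n) mod n"
          thus ?thesis using aF bF unfolding Rf_def Y0_def by auto
        next
          assume eq: "(b-n) mod n = (a-n) mod n \<and> (b-n) div n < (a-n) div n"
          hence "T1 $$ ((a-n) div n, (b-n) div n) = 0" using T1z ja by simp
          thus ?thesis using eq aF bF unfolding Rf_def by auto
        qed
      qed
    qed
  qed
  have ttLv_hi: "\<And>b. b < n \<Longrightarrow> tt (b+n) = b \<and> Lv (b+n) = 1 \<and> tt b = b \<and> Lv b = 0"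
    unfolding tt_def Lv_def by simp
  have ttLv_mid: "\<And>a. n \<le> a \<Longrightarrow> a < 2*n \<Longrightarrow> tt a = a - n \<and> Lv a = 1 \<and> tt (a-n) = a - n \<and> Lv (a-n) = 0"
  proof -
    fix a assume "n \<le> a" "a < 2*n"
    hence "a - n < n" by simp
    thus "tt a = a - n \<and> Lv a = 1 \<and> tt (a-n) = a - n \<and> Lv (a-n) = 0" using \<open>n \<le> a\<close> unfolding tt_def Lv_def by simp
  qed
  have Lv0: "\<And>a. Lv a = 0 \<longleftrightarrow> a < n" unfolding Lv_def by simp
  have Lv1: "\<And>a. Lv a = 1 \<longleftrightarrow> n \<le> a \<and> a < 2*n" unfolding Lv_def using n by (auto simp: div_eq_0_iff)
  have N2': "\<And>b. b < n \<Longrightarrow> b + n < N" using N2 by simp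
  have R'z: "\<And>a b. a < N \<Longrightarrow> b < N \<Longrightarrow> f b < f a \<Longrightarrow> R' $$ (a,b) = 0"
  proof -
    fix a b assume a: "a < N" and b: "b < N" and fba: "f b < f a"
    hence lt: "tt b < tt a \<or> (tt b = tt a \<and> Lv b < Lv a)" using flt by simp
    show "R' $$ (a,b) = 0"
    proof (cases "Lv a = 1 \<and> Lv b = 0 \<and> tt a = tt b")
      case True
      hence bn: "b < n" and an: "n \<le> a" "a < 2*n" using Lv0 Lv1 by auto
      have ab: "a = b + n" using True ttLv_mid[OF an] ttLv_hi[OF bn] an by simp
      have "R' $$ (a,b) = Y a b + - \<sigma> b * Y b b" unfolding R'ent[OF a b] using an ab by simp
      also have "\<dots> = r b + \<sigma> b * s b + - \<sigma> b * (p b + \<sigma> b * q b)"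
        unfolding Y_def ab using Rpq[OF bn] bn by simp
      also have "\<dots> = 0" unfolding \<sigma>_def by (rule sig_zero[OF qr q0])
      finally show ?thesis .
    next
      case nE: False
      have Rab: "R $$ (a,b) = 0" by (rule Zr[OF a b]) (use lt nE in auto)
      have Rabn: "b < n \<Longrightarrow> R $$ (a, b+n) = 0"
      proof -
        assume bn: "b < n"
        show "R $$ (a, b+n) = 0"
        proof (rule Zr[OF a N2'[OF bn]])
          show "tt (b + n) < tt a \<or> tt (b + n) = tt a \<and> Lv (b + n) < Lv a \<and> \<not> (Lv a = 1 \<and> Lv (b + n) = 0)"
            using lt nE ttLv_hi[OF bn] by auto
        qed
      qed
      have Yab: "Y a b = 0" unfolding Y_def using Rab Rabn by simp
      have Y2: "n \<le> a \<Longrightarrow> a < 2*n \<Longrightarrow> Y (a-n) b = 0"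
      proof -
        assume an: "n \<le> a" "a < 2*n"
        have an': "a - n < N" using a by simp
        have tlt: "tt b < tt (a-n)" using lt nE ttLv_mid[OF an] Lv0[of b] by auto
        have "R $$ (a-n, b) = 0" by (rule Zr[OF an' b]) (use tlt in auto)
        moreover have "b < n \<Longrightarrow> R $$ (a-n, b+n) = 0"
          by (rule Zr[OF an' N2']) (use tlt ttLv_hi in auto)
        ultimately show "Y (a-n) b = 0" unfolding Y_def by simp
      qed
      show ?thesis unfolding R'ent[OF a b] using Yab Y2 by simp
    qed
  qed
  have cpR': "char_poly R' = (\<Prod>a<N. [:-R' $$ (a,a),1:])"
    by (rule char_poly_key_triangular[OF R' fbij R'z])
  have dA: "\<And>t. t < n \<Longrightarrow> R' $$ (t,t) = p t + \<sigma> t * q t"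
  proof -
    fix t assume t: "t < n"
    have tN: "t < N" using t N2 by simp
    show "R' $$ (t,t) = p t + \<sigma> t * q t" unfolding R'ent[OF tN tN] Y_def using t Rpq[OF t] by simp
  qed
  have dB: "\<And>t. t < n \<Longrightarrow> R' $$ (n+t,n+t) = s t + - \<sigma> t * q t"
  proof -
    fix t assume t: "t < n"
    have tN: "n + t < N" using t N2 by simp
    show "R' $$ (n+t,n+t) = s t + - \<sigma> t * q t" unfolding R'ent[OF tN tN] Y_def using t Rpq[OF t]
      by (simp add: add.commute)
  qed
  have dC: "\<And>j t. j < m - 1 \<Longrightarrow> t < n \<Longrightarrow> R' $$ (n + (Suc j * n + t), n + (Suc j * n + t)) = T1 $$ (Suc j, Suc j)"
  proof -
    fix j t assume j: "j < m - 1" and t: "t < n"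
    define a where "a = n + (Suc j * n + t)"
    have "Suc j * n + t < m * n"
    proof -
      have "Suc j * n + t < Suc j * n + n" using t by simp
      also have "\<dots> = Suc (Suc j) * n" by simp
      also have "\<dots> \<le> m * n" using j by (intro mult_le_mono1) simp
      finally show ?thesis .
    qed
    hence aN: "a < N" unfolding a_def N_def by simp
    have e: "a - n = t + n * Suc j" unfolding a_def by (simp add: mult.commute)
    have dv: "(a - n) div n = Suc j" "(a - n) mod n = t" unfolding e using t n
      by (simp_all del: mult_Suc_right add: div_mult_self2)
    have a2: "\<not> a < 2*n" "\<not> a < n" unfolding a_def by auto
    have "R' $$ (a,a) = R $$ (a,a)" unfolding R'ent[OF aN aN] Y_def using a2 by simp
    also have "\<dots> = T1 $$ (Suc j, Suc j)" unfolding Rent[OF aN aN] Rf_def using a2 dv by simp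
    finally show "R' $$ (n + (Suc j * n + t), n + (Suc j * n + t)) = T1 $$ (Suc j, Suc j)" unfolding a_def .
  qed
  define F where "F = (\<lambda>x::real. [:-x,1:])"
  define Dq where "Dq = (\<lambda>t. (p t - s t)^2 + 4 * q t * r t)"
  define Ap where "Ap = (\<lambda>t. (p t + s t + sqrt (Dq t))/2)"
  define Am where "Am = (\<lambda>t. (p t + s t - sqrt (Dq t))/2)"
  have pairs: "\<And>t. F (p t + \<sigma> t * q t) * F (s t + - \<sigma> t * q t) = F (Ap t) * F (Am t)"
    unfolding F_def Ap_def Am_def Dq_def \<sigma>_def by (rule sig_pair[OF qr q0])
  obtain m' where m': "m = Suc m'" using m by (cases m) auto
  obtain n' where n': "n = Suc n'" using n by (cases n) auto
  have cpR'2: "char_poly R' = (\<Prod>t<n. F (Ap t) * F (Am t)) * (\<Prod>j<m'. F (T1 $$ (Suc j, Suc j))) ^ n"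
  proof -
    have "char_poly R' = (\<Prod>a<n. F (R' $$ (a,a))) * (\<Prod>c<m*n. F (R' $$ (n+c,n+c)))"
      unfolding cpR' N_def F_def by (rule prod_split_add)
    also have "(\<Prod>c<m*n. F (R' $$ (n+c,n+c))) = (\<Prod>j<m. \<Prod>t<n. F (R' $$ (n+(j*n+t), n+(j*n+t))))"
      by (rule prod_mult_idx)
    also have "\<dots> = (\<Prod>t<n. F (R' $$ (n+t, n+t))) * (\<Prod>j<m'. \<Prod>t<n. F (R' $$ (n+(Suc j*n+t), n+(Suc j*n+t))))"
      unfolding m' by (subst prod.lessThan_Suc_shift) simp
    also have "(\<Prod>j<m'. \<Prod>t<n. F (R' $$ (n+(Suc j*n+t), n+(Suc j*n+t)))) = (\<Prod>j<m'. F (T1 $$ (Suc j, Suc j)) ^ n)"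
    proof (intro prod.cong refl)
      fix j assume j: "j \<in> {..<m'}"
      have "(\<Prod>t<n. F (R' $$ (n+(Suc j*n+t), n+(Suc j*n+t)))) = (\<Prod>t<n. F (T1 $$ (Suc j, Suc j)))"
        by (intro prod.cong refl arg_cong[where f=F] dC) (use j m' in auto)
      thus "(\<Prod>t<n. F (R' $$ (n+(Suc j*n+t), n+(Suc j*n+t)))) = F (T1 $$ (Suc j, Suc j)) ^ n" by simp
    qed
    also have "\<dots> = (\<Prod>j<m'. F (T1 $$ (Suc j, Suc j))) ^ n" by (simp add: prod_power_distrib)
    finally have c1: "char_poly R' = (\<Prod>a<n. F (R' $$ (a,a))) * ((\<Prod>t<n. F (R' $$ (n+t, n+t))) * (\<Prod>j<m'. F (T1 $$ (Suc j, Suc j))) ^ n)" .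
    have c2: "(\<Prod>a<n. F (R' $$ (a,a))) * (\<Prod>t<n. F (R' $$ (n+t, n+t))) = (\<Prod>t<n. F (Ap t) * F (Am t))"
      unfolding prod.distrib[symmetric]
    proof (intro prod.cong refl)
      fix t assume "t \<in> {..<n}"
      hence t: "t < n" by simp
      show "F (R' $$ (t,t)) * F (R' $$ (n+t, n+t)) = F (Ap t) * F (Am t)"
        unfolding dA[OF t] dB[OF t] by (rule pairs)
    qed
    show ?thesis unfolding c1 mult.assoc[symmetric] c2 ..
  qed
  define lp where "lp = (\<lambda>\<mu>. (\<mu> + (l1 - real m) + sqrt ((\<mu> - (l1 - real m))^2 + 16 * real m * b^2)) / 2)"
  define lm where "lm = (\<lambda>\<mu>. (\<mu> + (l1 - real m) - sqrt ((\<mu> - (l1 - real m))^2 + 16 * real m * b^2)) / 2)"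
  define \<alpha>1 where "\<alpha>1 = (l0 + (real m * (real n - 1) + l1) + sqrt ((l0 - (real m * (real n - 1) + l1))^2 + 4 * real m * (real n - 2*b)^2)) / 2"
  define \<alpha>2 where "\<alpha>2 = (l0 + (real m * (real n - 1) + l1) - sqrt ((l0 - (real m * (real n - 1) + l1))^2 + 4 * real m * (real n - 2*b)^2)) / 2"
  define Tgt where "Tgt = image_mset lp (mset es0) + image_mset lm (mset es0) + repeat_mset n (mset es1) + {#\<alpha>1, \<alpha>2#}"
  have Apm0: "Ap 0 = \<alpha>1 \<and> Am 0 = \<alpha>2"
  proof -
    have "p 0 = l0" "s 0 = real m * (real n - 1) + l1" "q 0 * r 0 = real m * (real n - 2*b)^2"
      unfolding p_def s_def q_def r_def X0_def Y0_def using T000 u0 by (simp_all add: power2_eq_square)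
    thus ?thesis unfolding Ap_def Am_def Dq_def \<alpha>1_def \<alpha>2_def by (simp add: mult.assoc)
  qed
  have ApmS: "\<And>t. Suc t < n \<Longrightarrow> Ap (Suc t) = lp (T0 $$ (Suc t, Suc t)) \<and> Am (Suc t) = lm (T0 $$ (Suc t, Suc t))"
  proof -
    fix t assume "Suc t < n"
    have "p (Suc t) = T0 $$ (Suc t, Suc t)" "s (Suc t) = l1 - real m" "q (Suc t) * r (Suc t) = 4 * real m * b^2"
      unfolding p_def s_def q_def r_def X0_def Y0_def by (simp_all add: power2_eq_square)
    thus "Ap (Suc t) = lp (T0 $$ (Suc t, Suc t)) \<and> Am (Suc t) = lm (T0 $$ (Suc t, Suc t))"
      unfolding Ap_def Am_def Dq_def lp_def lm_def by (simp add: mult.assoc)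
  qed
  have pe0: "\<And>g. (\<Prod>\<mu>\<in>#mset es0. g \<mu>) = (\<Prod>t<n'. g (T0 $$ (Suc t, Suc t)))"
    unfolding prod_mset_linear_list es0eq prod_list_upt_shift n' by simp
  have pe1: "\<And>g. (\<Prod>\<mu>\<in>#mset es1. g \<mu>) = (\<Prod>j<m'. g (T1 $$ (Suc j, Suc j)))"
    unfolding prod_mset_linear_list es1eq prod_list_upt_shift m' by simp
  have cpT: "(\<Prod>x\<in>#Tgt. F x) = (\<Prod>\<mu>\<in>#mset es0. F (lp \<mu>)) * (\<Prod>\<mu>\<in>#mset es0. F (lm \<mu>)) * (\<Prod>\<mu>\<in>#mset es1. F \<mu>) ^ n * (F \<alpha>1 * F \<alpha>2)"
    unfolding Tgt_def by (simp add: prod_mset_repeat mult.assoc image_mset.compositionality o_def)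
  have "char_poly Sc = char_poly R'" using char_poly_similar[OF simR] char_poly_similar[OF simR2] by simp
  also have "\<dots> = (\<Prod>x\<in>#Tgt. F x)"
  proof -
    have "(\<Prod>t<n. F (Ap t) * F (Am t)) = (F \<alpha>1 * F \<alpha>2) * ((\<Prod>\<mu>\<in>#mset es0. F (lp \<mu>)) * (\<Prod>\<mu>\<in>#mset es0. F (lm \<mu>)))"
      unfolding pe0 prod.distrib[symmetric] unfolding n' prod.lessThan_Suc_shift
      using Apm0 ApmS n' by (simp del: mult_pCons_left)
    thus ?thesis unfolding cpR'2 cpT pe1 by (simp add: ac_simps)
  qed
  finally have "spectrum_mset Sc = Tgt" unfolding F_def by (rule spectrum_mset_eq_mset)
  moreover have "Sc = four_block_mat S0 (kron (all_ones 1 m) (all_ones n n - (2*b) \<cdot>\<^sub>m 1\<^sub>m n))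
                        (kron (all_ones m 1) (all_ones n n - (2*b) \<cdot>\<^sub>m 1\<^sub>m n))
                        (kron (all_ones m m) (all_ones n n - 1\<^sub>m n) + kron S1 (1\<^sub>m n))"
    unfolding Sc_def URA_def LLA_def BR_def C_def JI_def ..
  ultimately show ?thesis using spec0 spec1 unfolding Tgt_def lp_def lm_def \<alpha>1_def \<alpha>2_def by blast
qed

theorem theorem4p3:
  fixes k r0 r1 n m :: nat and E0 E1 :: "nat set set"
  assumes "n \<ge> 1" and "m \<ge> 1"
    and "regular_hg k r0 n E0" and "regular_hg k r1 m E1"
  shows
    "let b = corona_b k m;
         l0 = real n - 1 - 2 * real r0 * (real k - 1);
         l1 = real m - 1 - 2 * real r1 * (real k - 1);
         M0 = spectrum_mset (seidel_mat n E0) - {#l0#};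
         M1 = spectrum_mset (seidel_mat m E1) - {#l1#};
         c = 2 * real r1 * (real k - 1);
         B = 2 - real n * (real m + 1) + 2 * (real r0 + real r1) * (real k - 1);
         C = (real n - 1 - 2 * real r0 * (real k - 1)) * (real m * real n - 1 - 2 * real r1 * (real k - 1))
             - real m * (real n - 2 * b)^2
     in l0 \<in># spectrum_mset (seidel_mat n E0) \<and> l1 \<in># spectrum_mset (seidel_mat m E1) \<and>
        (\<exists>\<alpha>1 \<alpha>2. (\<forall>\<mu>::real. \<mu>^2 + B * \<mu> + C = (\<mu> - \<alpha>1) * (\<mu> - \<alpha>2)) \<and>
          spectrum_mset (seidel_corona k n m E0 E1) =
            image_mset (\<lambda>\<mu>. (\<mu> - 1 - c + sqrt ((\<mu> + 1 + c)^2 + 16 * real m * b^2)) / 2) M0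
          + image_mset (\<lambda>\<mu>. (\<mu> - 1 - c - sqrt ((\<mu> + 1 + c)^2 + 16 * real m * b^2)) / 2) M0
          + repeat_mset n M1
          + {#\<alpha>1, \<alpha>2#})"
proof -
  have n: "0 < n" and m: "0 < m" using assms(1,2) by auto
  define b where "b = corona_b k m"
  define l0 where "l0 = real n - 1 - 2 * real r0 * (real k - 1)"
  define l1 where "l1 = real m - 1 - 2 * real r1 * (real k - 1)"
  define c where "c = 2 * real r1 * (real k - 1)"
  have row0: "\<And>i. i < n \<Longrightarrow> (\<Sum>j<n. seidel_mat n E0 $$ (i,j)) = l0"
    unfolding l0_def by (rule seidel_rowsum[OF assms(3)])
  have row1: "\<And>i. i < m \<Longrightarrow> (\<Sum>j<m. seidel_mat m E1 $$ (i,j)) = l1"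
    unfolding l1_def by (rule seidel_rowsum[OF assms(4)])
  obtain es0 es1 where spec0: "spectrum_mset (seidel_mat n E0) = mset (l0 # es0)"
    and spec1: "spectrum_mset (seidel_mat m E1) = mset (l1 # es1)"
    and specC: "spectrum_mset (four_block_mat (seidel_mat n E0) (kron (all_ones 1 m) (all_ones n n - (2*b) \<cdot>\<^sub>m 1\<^sub>m n))
                        (kron (all_ones m 1) (all_ones n n - (2*b) \<cdot>\<^sub>m 1\<^sub>m n))
                        (kron (all_ones m m) (all_ones n n - 1\<^sub>m n) + kron (seidel_mat m E1) (1\<^sub>m n)))
    = image_mset (\<lambda>\<mu>. (\<mu> + (l1 - real m) + sqrt ((\<mu> - (l1 - real m))^2 + 16 * real m * b^2)) / 2) (mset es0)
    + image_mset (\<lambda>\<mu>. (\<mu> + (l1 - real m) - sqrt ((\<mu> - (l1 - real m))^2 + 16 * real m * b^2)) / 2) (mset es0)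
    + repeat_mset n (mset es1)
    + {# (l0 + (real m * (real n - 1) + l1) + sqrt ((l0 - (real m * (real n - 1) + l1))^2 + 4 * real m * (real n - 2*b)^2)) / 2,
         (l0 + (real m * (real n - 1) + l1) - sqrt ((l0 - (real m * (real n - 1) + l1))^2 + 4 * real m * (real n - 2*b)^2)) / 2 #}"
    using corona_main[OF n m seidel_carrier seidel_carrier seidel_sym seidel_sym row0 row1, of b] by blast
  have corona: "seidel_corona k n m E0 E1 = four_block_mat (seidel_mat n E0) (kron (all_ones 1 m) (all_ones n n - (2*b) \<cdot>\<^sub>m 1\<^sub>m n))
                        (kron (all_ones m 1) (all_ones n n - (2*b) \<cdot>\<^sub>m 1\<^sub>m n))
                        (kron (all_ones m m) (all_ones n n - 1\<^sub>m n) + kron (seidel_mat m E1) (1\<^sub>m n))"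
    unfolding seidel_corona_def b_def Let_def ..
  have l1c: "l1 - real m = - 1 - c" unfolding l1_def c_def by simp
  define P where "P = l0"
  define S where "S = real m * (real n - 1) + l1"
  define D where "D = (l0 - (real m * (real n - 1) + l1))^2 + 4 * real m * (real n - 2*b)^2"
  define \<alpha>1 where "\<alpha>1 = (l0 + (real m * (real n - 1) + l1) + sqrt D) / 2"
  define \<alpha>2 where "\<alpha>2 = (l0 + (real m * (real n - 1) + l1) - sqrt D) / 2"
  have D0: "D \<ge> 0" unfolding D_def by (intro add_nonneg_nonneg) auto
  have sq: "sqrt D * sqrt D = D" using D0 by simp
  have quad: "\<forall>\<mu>::real. \<mu>^2 + (2 - real n * (real m + 1) + 2 * (real r0 + real r1) * (real k - 1)) * \<mu> +
      ((real n - 1 - 2 * real r0 * (real k - 1)) * (real m * real n - 1 - 2 * real r1 * (real k - 1))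
             - real m * (real n - 2 * b)^2) = (\<mu> - \<alpha>1) * (\<mu> - \<alpha>2)"
  proof
    fix \<mu> :: real
    have sum: "\<alpha>1 + \<alpha>2 = l0 + (real m * (real n - 1) + l1)" unfolding \<alpha>1_def \<alpha>2_def by (simp add: field_simps)
    have prod: "\<alpha>1 * \<alpha>2 = l0 * (real m * (real n - 1) + l1) - real m * (real n - 2*b)^2"
      unfolding \<alpha>1_def \<alpha>2_def using sq unfolding D_def by (simp add: field_simps power2_eq_square)
    have "(\<mu> - \<alpha>1) * (\<mu> - \<alpha>2) = \<mu>^2 - (\<alpha>1 + \<alpha>2) * \<mu> + \<alpha>1 * \<alpha>2" by (simp add: algebra_simps power2_eq_square)
    also have "\<dots> = \<mu>^2 + (2 - real n * (real m + 1) + 2 * (real r0 + real r1) * (real k - 1)) * \<mu> +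
      ((real n - 1 - 2 * real r0 * (real k - 1)) * (real m * real n - 1 - 2 * real r1 * (real k - 1))
             - real m * (real n - 2 * b)^2)"
      unfolding sum prod l0_def l1_def by (simp add: algebra_simps)
    finally show "\<mu>^2 + (2 - real n * (real m + 1) + 2 * (real r0 + real r1) * (real k - 1)) * \<mu> +
      ((real n - 1 - 2 * real r0 * (real k - 1)) * (real m * real n - 1 - 2 * real r1 * (real k - 1))
             - real m * (real n - 2 * b)^2) = (\<mu> - \<alpha>1) * (\<mu> - \<alpha>2)" by simp
  qed
  have fp: "(\<lambda>\<mu>. (\<mu> + (l1 - real m) + sqrt ((\<mu> - (l1 - real m))^2 + 16 * real m * b^2)) / 2)
      = (\<lambda>\<mu>. (\<mu> - 1 - c + sqrt ((\<mu> + 1 + c)^2 + 16 * real m * b^2)) / 2)"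
    unfolding l1c by (rule ext) (simp add: algebra_simps)
  have fm: "(\<lambda>\<mu>. (\<mu> + (l1 - real m) - sqrt ((\<mu> - (l1 - real m))^2 + 16 * real m * b^2)) / 2)
      = (\<lambda>\<mu>. (\<mu> - 1 - c - sqrt ((\<mu> + 1 + c)^2 + 16 * real m * b^2)) / 2)"
    unfolding l1c by (rule ext) (simp add: algebra_simps)
  have M0: "spectrum_mset (seidel_mat n E0) - {#l0#} = mset es0" unfolding spec0 by simp
  have M1: "spectrum_mset (seidel_mat m E1) - {#l1#} = mset es1" unfolding spec1 by simp
  have spC: "spectrum_mset (seidel_corona k n m E0 E1) =
            image_mset (\<lambda>\<mu>. (\<mu> - 1 - c + sqrt ((\<mu> + 1 + c)^2 + 16 * real m * b^2)) / 2) (spectrum_mset (seidel_mat n E0) - {#l0#})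
          + image_mset (\<lambda>\<mu>. (\<mu> - 1 - c - sqrt ((\<mu> + 1 + c)^2 + 16 * real m * b^2)) / 2) (spectrum_mset (seidel_mat n E0) - {#l0#})
          + repeat_mset n (spectrum_mset (seidel_mat m E1) - {#l1#}) + {#\<alpha>1, \<alpha>2#}"
      unfolding M0 M1 corona specC fp[symmetric] fm[symmetric] \<alpha>1_def \<alpha>2_def D_def ..
  have l0in: "l0 \<in># spectrum_mset (seidel_mat n E0)" unfolding spec0 by simp
  have l1in: "l1 \<in># spectrum_mset (seidel_mat m E1)" unfolding spec1 by simp
  show ?thesis unfolding Let_def
    apply (intro conjI)
    subgoal using l0in unfolding l0_def .
    subgoal using l1in unfolding l1_def .
    apply (rule exI[of _ \<alpha>1], rule exI[of _ \<alpha>2], rule conjI)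
    subgoal using quad unfolding b_def .
    subgoal using spC unfolding b_def l0_def l1_def c_def .
    done
qed

end
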